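(* Let $\mathcal B_{\rm com}$ be the set of operators on $\mathcal H=\mathcal H_{\rm loc}^{\otimes n}$ that commute with every (physical) quantum i.i.d. state $\hat\rho_{\rm loc}^{\otimes n}$. (a) For spin systems and massless boson systems (where every density matrix $\hat\rho_{\rm loc}$ on $\mathcal H_{\rm loc}$ is allowed), $\mathcal B_{\rm com}=\{\hat P_\sigma:\sigma\in\mathfrak S_n\}''={\rm span}\{\hat P_\sigma:\sigma\in\mathfrak S_n\}$. (b) For massive fermion and boson systems subject to the number-superselection rule (where only $\hat\rho_{\rm loc}$ with $[\hat\rho_{\rm loc},\hat n]=0$ are allowed, $\hat n$ the single-site number operator), $\mathcal B_{\rm com}=\{\hat P_\sigma:\sigma\in\mathfrak S_n\}\cup\{\hat n_i:i\in\Lambda\})''$, i.e. the double commutant of the set consisting of all permutation operators and all site number operators $\hat n_i$.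
   Context: A lattice of $n$ sites $\Lambda=\{1,\dots,n\}$, each carrying a copy of a finite-dimensional local Hilbert space $\mathcal H_{\rm loc}$ (for fermions the local Fock space of a site, the global space being identified with $\mathcal H_{\rm loc}^{\otimes n}$), $\mathcal H=\mathcal H_{\rm loc}^{\otimes n}$. For a single-site operator $X$, $X_i$ denotes $X$ on site $i$. $\mathfrak S_n$ is the symmetric group; the permutation operator $\hat P_\sigma$ is the unitary on $\mathcal H$ with $\hat P_\sigma \hat X_i\hat P_\sigma^\dagger=\hat X_{\sigma(i)}$ for every single-site operator $X$ (for fermions this means $\hat P_\sigma \hat c_{is}\hat P_\sigma^\dagger=\hat c_{\sigma(i)s}$ for the annihilation operators $\hat c_{is}$, $s$ an internal index). A quantum i.i.d. state is $\hat\rho_{\rm loc}^{\otimes n}$ with $\hat\rho_{\rm loc}$ a density matrix on $\mathcal H_{\rm loc}$. For a set $\mathcal A$ of operators, $\mathcal A'=\{X\in\mathcal B(\mathcal H):[X,Y]=0\ \forall Y\in\mathcal A\}$ is its commutant and $\mathcal A''=(\mathcal A')'$. *)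

theory Defs
  imports Complex_Main "HOL-Library.FuncSet" "HOL-Combinatorics.Permutations"
begin

text \<open>Local Hilbert space: C^d with orthonormal basis indexed by 0..<d.
  Global space H = (C^d)^{tensor n}: basis vectors are configurations
  x : {0..<n} -> {0..<d} (extensional functions).  Operators on H are
  represented by their matrix in this product basis, as functions
  cfg => cfg => complex which vanish outside cfgs x cfgs.\<close>

type_synonym cfg = "nat \<Rightarrow> nat"
type_synonym op = "cfg \<Rightarrow> cfg \<Rightarrow> complex"

definition cfgs :: "nat \<Rightarrow> nat \<Rightarrow> cfg set" where
  "cfgs n d = ({0..<n} \<rightarrow>\<^sub>E {0..<d})"

definition ops :: "nat \<Rightarrow> nat \<Rightarrow> op set" where
  "ops n d = {A. \<forall>x y. (x \<notin> cfgs n d \<or> y \<notin> cfgs n d) \<longrightarrow> A x y = 0}"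

definition opmult :: "nat \<Rightarrow> nat \<Rightarrow> op \<Rightarrow> op \<Rightarrow> op" where
  "opmult n d A B = (\<lambda>x y. if x \<in> cfgs n d \<and> y \<in> cfgs n d
      then (\<Sum>z\<in>cfgs n d. A x z * B z y) else 0)"

definition commutant :: "nat \<Rightarrow> nat \<Rightarrow> op set \<Rightarrow> op set" where
  "commutant n d S = {X \<in> ops n d. \<forall>Y\<in>S. opmult n d X Y = opmult n d Y X}"

definition dcommutant :: "nat \<Rightarrow> nat \<Rightarrow> op set \<Rightarrow> op set" where
  "dcommutant n d S = commutant n d (commutant n d S)"

definition density :: "nat \<Rightarrow> (nat \<Rightarrow> nat \<Rightarrow> complex) \<Rightarrow> bool" where
  "density d \<rho> \<longleftrightarrow>
     (\<forall>i j. (i \<ge> d \<or> j \<ge> d) \<longrightarrow> \<rho> i j = 0) \<and>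
     (\<forall>i j. \<rho> j i = cnj (\<rho> i j)) \<and>
     (\<forall>v::nat \<Rightarrow> complex. 0 \<le> Re (\<Sum>i<d. \<Sum>j<d. cnj (v i) * \<rho> i j * v j)) \<and>
     (\<Sum>i<d. \<rho> i i) = 1"

definition tpow :: "nat \<Rightarrow> nat \<Rightarrow> (nat \<Rightarrow> nat \<Rightarrow> complex) \<Rightarrow> op" where
  "tpow n d \<rho> = (\<lambda>x y. if x \<in> cfgs n d \<and> y \<in> cfgs n d
      then (\<Prod>i<n. \<rho> (x i) (y i)) else 0)"

definition Bcom :: "nat \<Rightarrow> nat \<Rightarrow> ((nat \<Rightarrow> nat \<Rightarrow> complex) \<Rightarrow> bool) \<Rightarrow> op set" where
  "Bcom n d phys = commutant n d {tpow n d \<rho> | \<rho>. phys \<rho>}"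

text \<open>Single-site number operator, diagonal in the local basis with
  eigenvalue N a on basis vector a.  Number superselection for a local state.\<close>
definition commutes_number :: "nat \<Rightarrow> (nat \<Rightarrow> nat) \<Rightarrow> (nat \<Rightarrow> nat \<Rightarrow> complex) \<Rightarrow> bool" where
  "commutes_number d N \<rho> \<longleftrightarrow> (\<forall>a<d. \<forall>b<d. \<rho> a b * of_nat (N b) = of_nat (N a) * \<rho> a b)"

definition num_op :: "nat \<Rightarrow> nat \<Rightarrow> (nat \<Rightarrow> nat) \<Rightarrow> nat \<Rightarrow> op" where
  "num_op n d N i = (\<lambda>x y. if x \<in> cfgs n d \<and> y = x then of_nat (N (x i)) else 0)"

text \<open>Permutation operator P_sigma, with P_sigma X_i P_sigma^dagger = X_{sigma i}:
  P_sigma |x> = s |y> with y (sigma i) = x i.  For fermions (ferm = True) the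
  global Fock space is identified with (C^d)^{tensor n} via site ordering 0<1<...<n-1
  (Jordan--Wigner), local basis vector a having fermion number N a, and the sign is
  s = prod over pairs i<j with sigma i > sigma j of (-1)^(N(x i) * N(x j)).\<close>
definition perm_sign :: "bool \<Rightarrow> (nat \<Rightarrow> nat) \<Rightarrow> nat \<Rightarrow> (nat \<Rightarrow> nat) \<Rightarrow> cfg \<Rightarrow> complex" where
  "perm_sign ferm N n \<sigma> x = (if ferm then
      (\<Prod>p\<in>{(i,j). i < j \<and> j < n \<and> \<sigma> j < \<sigma> i}. (-1) ^ (N (x (fst p)) * N (x (snd p))))
    else 1)"

definition perm_op :: "nat \<Rightarrow> nat \<Rightarrow> bool \<Rightarrow> (nat \<Rightarrow> nat) \<Rightarrow> (nat \<Rightarrow> nat) \<Rightarrow> op" where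
  "perm_op n d ferm N \<sigma> = (\<lambda>y x. if x \<in> cfgs n d \<and> y \<in> cfgs n d \<and> (\<forall>i<n. y (\<sigma> i) = x i)
      then perm_sign ferm N n \<sigma> x else 0)"

definition perm_ops :: "nat \<Rightarrow> nat \<Rightarrow> bool \<Rightarrow> (nat \<Rightarrow> nat) \<Rightarrow> op set" where
  "perm_ops n d ferm N = {perm_op n d ferm N \<sigma> | \<sigma>. \<sigma> permutes {0..<n}}"

definition perm_span :: "nat \<Rightarrow> nat \<Rightarrow> op set" where
  "perm_span n d = {X. \<exists>c :: (nat \<Rightarrow> nat) \<Rightarrow> complex.
      X = (\<lambda>y x. \<Sum>\<sigma>\<in>{\<sigma>. \<sigma> permutes {0..<n}}. c \<sigma> * perm_op n d False (\<lambda>_. 0) \<sigma> y x)}"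

end

theory Submission
  imports Defs "HOL-Computational_Algebra.Polynomial"
begin


definition pre :: "nat \<Rightarrow> (nat\<Rightarrow>nat) \<Rightarrow> cfg \<Rightarrow> cfg" where
  "pre n \<sigma> x = restrict (x \<circ> \<sigma>) {0..<n}"

lemma finite_cfgs[simp]: "finite (cfgs n d)"
  unfolding cfgs_def by (simp add: finite_PiE)

lemma cfgs_ext: "x \<in> cfgs n d \<Longrightarrow> y \<in> cfgs n d \<Longrightarrow> (\<forall>i<n. x i = y i) \<Longrightarrow> x = y"
  unfolding cfgs_def by (rule PiE_ext) auto

lemma cfgs_out: "x \<in> cfgs n d \<Longrightarrow> i \<ge> n \<Longrightarrow> x i = undefined"
  unfolding cfgs_def by (auto simp: PiE_def extensional_def)

lemma cfgs_in: "x \<in> cfgs n d \<Longrightarrow> i < n \<Longrightarrow> x i < d"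
  unfolding cfgs_def by auto

lemma pre_in: "\<sigma> permutes {0..<n} \<Longrightarrow> x \<in> cfgs n d \<Longrightarrow> pre n \<sigma> x \<in> cfgs n d"
  unfolding pre_def cfgs_def using permutes_in_image by fastforce

lemma pre_app: "i < n \<Longrightarrow> pre n \<sigma> x i = x (\<sigma> i)"
  unfolding pre_def by simp

lemma pre_comp: "\<sigma> permutes {0..<n} \<Longrightarrow> pre n \<sigma> (pre n \<tau> x) = pre n (\<tau> \<circ> \<sigma>) x"
  unfolding pre_def using permutes_in_image by (fastforce simp: restrict_def)

lemma pre_id: "x \<in> cfgs n d \<Longrightarrow> pre n id x = x"
  by (rule cfgs_ext[of _ n d]) (auto simp: pre_in permutes_id pre_app)

lemma pre_inv1: "\<sigma> permutes {0..<n} \<Longrightarrow> x \<in> cfgs n d \<Longrightarrow> pre n \<sigma> (pre n (inv \<sigma>) x) = x"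
  by (simp add: pre_comp permutes_inv_o pre_id)

lemma pre_inv2: "\<sigma> permutes {0..<n} \<Longrightarrow> x \<in> cfgs n d \<Longrightarrow> pre n (inv \<sigma>) (pre n \<sigma> x) = x"
  by (simp add: pre_comp permutes_inv_o pre_id permutes_inv)

lemma pre_bij: "\<sigma> permutes {0..<n} \<Longrightarrow> bij_betw (pre n \<sigma>) (cfgs n d) (cfgs n d)"
  apply (rule bij_betwI[where g="pre n (inv \<sigma>)"])
  by (auto simp: pre_in permutes_inv pre_inv1 pre_inv2 Pi_def)

lemma pre_char: assumes "\<sigma> permutes {0..<n}" "x \<in> cfgs n d" "y \<in> cfgs n d"
  shows "(\<forall>i<n. y (\<sigma> i) = x i) \<longleftrightarrow> x = pre n \<sigma> y"
proof
  assume h: "\<forall>i<n. y (\<sigma> i) = x i"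
  show "x = pre n \<sigma> y"
    by (rule cfgs_ext[of _ n d]) (use assms h in \<open>auto simp: pre_in pre_app\<close>)
qed (auto simp: pre_app)

lemma sum_delta_cfg: "z0 \<in> A \<Longrightarrow> finite A \<Longrightarrow> (\<Sum>z\<in>A. if z = z0 then f z else (0::complex)) = f z0"
  by (simp add: sum.delta')

lemma opmult_in: "x \<in> cfgs n d \<Longrightarrow> y \<in> cfgs n d \<Longrightarrow> opmult n d A B x y = (\<Sum>z\<in>cfgs n d. A x z * B z y)"
  unfolding opmult_def by simp

lemma pre_swap: assumes "\<sigma> permutes {0..<n}" "z \<in> cfgs n d" "y \<in> cfgs n d"
  shows "(y = pre n \<sigma> z) \<longleftrightarrow> (z = pre n (inv \<sigma>) y)"
  using assms pre_inv1[of \<sigma> n z d] pre_inv2[of \<sigma> n z d] pre_inv1[of \<sigma> n y d] pre_inv2[of \<sigma> n y d]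
  by auto

lemma opmult_perm_right:
  assumes "\<sigma> permutes {0..<n}" "x \<in> cfgs n d" "y \<in> cfgs n d"
  shows "opmult n d Z (perm_op n d f N \<sigma>) x y = Z x (pre n (inv \<sigma>) y) * perm_sign f N n \<sigma> y"
proof -
  have "opmult n d Z (perm_op n d f N \<sigma>) x y = (\<Sum>z\<in>cfgs n d. Z x z * perm_op n d f N \<sigma> z y)"
    using assms by (rule_tac opmult_in) auto
  also have "\<dots> = (\<Sum>z\<in>cfgs n d. if z = pre n (inv \<sigma>) y then Z x z * perm_sign f N n \<sigma> y else 0)"
  proof (rule sum.cong)
    fix z assume z: "z \<in> cfgs n d"
    have "(\<forall>i<n. z (\<sigma> i) = y i) \<longleftrightarrow> z = pre n (inv \<sigma>) y"
      using pre_char[OF assms(1) assms(3) z] pre_swap[OF assms(1) z assms(3)] by simp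
    then show "Z x z * perm_op n d f N \<sigma> z y = (if z = pre n (inv \<sigma>) y then Z x z * perm_sign f N n \<sigma> y else 0)"
      unfolding perm_op_def using z assms by simp
  qed simp
  also have "\<dots> = Z x (pre n (inv \<sigma>) y) * perm_sign f N n \<sigma> y"
    by (rule sum_delta_cfg) (auto simp: assms pre_in permutes_inv)
  finally show ?thesis .
qed

lemma opmult_perm_left:
  assumes "\<sigma> permutes {0..<n}" "x \<in> cfgs n d" "y \<in> cfgs n d"
  shows "opmult n d (perm_op n d f N \<sigma>) Z x y = perm_sign f N n \<sigma> (pre n \<sigma> x) * Z (pre n \<sigma> x) y"
proof -
  have "opmult n d (perm_op n d f N \<sigma>) Z x y = (\<Sum>z\<in>cfgs n d. perm_op n d f N \<sigma> x z * Z z y)"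
    using assms by (rule_tac opmult_in) auto
  also have "\<dots> = (\<Sum>z\<in>cfgs n d. if z = pre n \<sigma> x then perm_sign f N n \<sigma> z * Z z y else 0)"
  proof (rule sum.cong)
    fix z assume z: "z \<in> cfgs n d"
    have "(\<forall>i<n. x (\<sigma> i) = z i) \<longleftrightarrow> z = pre n \<sigma> x"
      using pre_char[OF assms(1) z assms(2)] by simp
    then show "perm_op n d f N \<sigma> x z * Z z y = (if z = pre n \<sigma> x then perm_sign f N n \<sigma> z * Z z y else 0)"
      unfolding perm_op_def using z assms by simp
  qed simp
  also have "\<dots> = perm_sign f N n \<sigma> (pre n \<sigma> x) * Z (pre n \<sigma> x) y"
    by (rule sum_delta_cfg) (auto simp: assms pre_in)
  finally show ?thesis .
qed

lemma opmult_out: "\<not> (x \<in> cfgs n d \<and> y \<in> cfgs n d) \<Longrightarrow> opmult n d A B x y = 0"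
  unfolding opmult_def by auto

lemma perm_op_False_indep: "perm_op n d False N \<sigma> = perm_op n d False N2 \<sigma>"
  unfolding perm_op_def perm_sign_def if_False by (rule refl)

lemma perm_sign_False[simp]: "perm_sign False N n \<sigma> x = 1"
  unfolding perm_sign_def by simp



definition ispan :: "'i set \<Rightarrow> ('i \<Rightarrow> op) \<Rightarrow> op set" where
  "ispan I f = {Y. \<exists>c. Y = (\<lambda>x y. \<Sum>i\<in>I. c i * f i x y)}"

lemma ispan_0: "(\<lambda>x y. 0) \<in> ispan I f"
  unfolding ispan_def mem_Collect_eq by (rule exI[of _ "\<lambda>_. 0"]) simp

lemma ispan_add: "Y \<in> ispan I f \<Longrightarrow> Z \<in> ispan I f \<Longrightarrow> (\<lambda>x y. Y x y + Z x y) \<in> ispan I f"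
  unfolding ispan_def
  apply clarify
  subgoal for c c'
    by (rule exI[of _ "\<lambda>i. c i + c' i"]) (simp add: sum.distrib ring_distribs)
  done

lemma ispan_scale: "Y \<in> ispan I f \<Longrightarrow> (\<lambda>x y. a * Y x y) \<in> ispan I f"
  unfolding ispan_def
  apply clarify
  subgoal for c
    by (rule exI[of _ "\<lambda>i. a * c i"]) (simp add: sum_distrib_left mult.assoc)
  done

lemma sum_ind: "finite I \<Longrightarrow> i \<in> I \<Longrightarrow> (\<Sum>j\<in>I. (if j = i then 1 else 0) * g j) = (g i::complex)"
proof -
  assume "finite I" "i \<in> I"
  have "(\<Sum>j\<in>I. (if j = i then 1 else 0) * g j) = (\<Sum>j\<in>I. if j = i then g j else 0)"
    by (rule sum.cong) auto
  also have "\<dots> = g i" using \<open>finite I\<close> \<open>i \<in> I\<close> by (simp add: sum.delta')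
  finally show ?thesis .
qed

lemma ispan_gen: "finite I \<Longrightarrow> i \<in> I \<Longrightarrow> f i \<in> ispan I f"
  unfolding ispan_def mem_Collect_eq
  by (rule exI[of _ "\<lambda>j. if j = i then 1 else 0"]) (simp add: sum_ind)

lemma ispan_sum: "finite J \<Longrightarrow> (\<And>j. j \<in> J \<Longrightarrow> Y j \<in> ispan I f) \<Longrightarrow> (\<lambda>x y. \<Sum>j\<in>J. Y j x y) \<in> ispan I f"
proof (induction J rule: finite_induct)
  case empty then show ?case by (simp add: ispan_0)
next
  case (insert j J)
  have "(\<lambda>x y. Y j x y + (\<Sum>j\<in>J. Y j x y)) \<in> ispan I f"
    using insert by (intro ispan_add) auto
  then show ?case using insert by simp
qed

lemma ispan_mono: "finite I \<Longrightarrow> ispan I f \<subseteq> ispan (insert i I) f"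
  unfolding ispan_def
proof clarify
  fix c assume "finite I"
  show "\<exists>c'. (\<lambda>x y. \<Sum>i\<in>I. c i * f i x y) = (\<lambda>x y. \<Sum>i\<in>insert i I. c' i * f i x y)"
  proof (cases "i \<in> I")
    case True then show ?thesis by (auto simp: insert_absorb)
  next
    case False
    show ?thesis
      apply (rule exI[of _ "\<lambda>j. if j = i then 0 else c j"])
      using False \<open>finite I\<close> by (auto intro!: ext sum.cong)
  qed
qed

lemma ispan_insert_decomp: "finite I \<Longrightarrow> i \<notin> I \<Longrightarrow> Y \<in> ispan (insert i I) f \<Longrightarrow>
   \<exists>Y1 \<in> ispan I f. \<exists>a. Y = (\<lambda>x y. Y1 x y + a * f i x y)"
  unfolding ispan_def
proof clarify
  fix c assume "finite I" "i \<notin> I"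
  show "\<exists>Y1\<in>{Y. \<exists>c. Y = (\<lambda>x y. \<Sum>i\<in>I. c i * f i x y)}. \<exists>a. (\<lambda>x y. \<Sum>i\<in>insert i I. c i * f i x y) = (\<lambda>x y. Y1 x y + a * f i x y)"
    apply (rule bexI[of _ "\<lambda>x y. \<Sum>i\<in>I. c i * f i x y"])
     apply (rule exI[of _ "c i"])
    using \<open>finite I\<close> \<open>i \<notin> I\<close> by (auto simp: add.commute)
qed

lemma ispan_ops: "(\<And>i. i \<in> I \<Longrightarrow> f i \<in> ops n d) \<Longrightarrow> ispan I f \<subseteq> ops n d"
  unfolding ispan_def ops_def by auto

definition kern :: "nat \<Rightarrow> nat \<Rightarrow> (cfg \<Rightarrow> cfg \<Rightarrow> cfg \<Rightarrow> cfg \<Rightarrow> complex) \<Rightarrow> op \<Rightarrow> op" where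
  "kern n d K Y = (\<lambda>a b. if a \<in> cfgs n d \<and> b \<in> cfgs n d then
      (\<Sum>c\<in>cfgs n d. \<Sum>e\<in>cfgs n d. K a b c e * Y c e) else 0)"

lemma kern_lin: "kern n d K (\<lambda>x y. Y x y + a * Z x y) = (\<lambda>x y. kern n d K Y x y + a * kern n d K Z x y)"
  unfolding kern_def by (auto intro!: ext simp: ring_distribs sum.distrib sum_distrib_left mult.left_commute)

lemma proj_exists:
  assumes "finite I" "\<And>i. i \<in> I \<Longrightarrow> f i \<in> ops n d"
  shows "\<exists>K. (\<forall>Y. kern n d K Y \<in> ispan I f) \<and> (\<forall>Y \<in> ispan I f. kern n d K Y = Y)"
  using assms
proof (induction I rule: finite_induct)
  case empty
  have "kern n d (\<lambda>_ _ _ _. 0) Y = (\<lambda>x y. 0)" for Y unfolding kern_def by (auto intro!: ext)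
  moreover have "ispan {} f = {\<lambda>x y. 0}" unfolding ispan_def by auto
  ultimately show ?case by (intro exI[of _ "\<lambda>_ _ _ _. 0"]) auto
next
  case (insert i I)
  from insert obtain K where K1: "\<forall>Y. kern n d K Y \<in> ispan I f" and K2: "\<forall>Y \<in> ispan I f. kern n d K Y = Y"
    by auto
  have gops: "f i \<in> ops n d" using insert by auto
  define w where "w = (\<lambda>x y. f i x y - kern n d K (f i) x y)"
  have kops: "kern n d K Y x y = 0" if "\<not> (x \<in> cfgs n d \<and> y \<in> cfgs n d)" for Y x y
    using that unfolding kern_def by auto
  have wout: "w x y = 0" if "\<not> (x \<in> cfgs n d \<and> y \<in> cfgs n d)" for x y
    using that gops kops unfolding w_def ops_def by auto
  show ?case
  proof (cases "\<forall>x y. w x y = 0")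
    case True
    have fi: "f i = kern n d K (f i)"
    proof (intro ext)
      fix x y
      have "w x y = 0" using True by blast
      then show "f i x y = kern n d K (f i) x y" by (simp only: w_def right_minus_eq)
    qed
    have "ispan (insert i I) f = ispan I f"
    proof
      show "ispan I f \<subseteq> ispan (insert i I) f" by (rule ispan_mono[OF insert(1)])
      show "ispan (insert i I) f \<subseteq> ispan I f"
      proof
        fix Y assume "Y \<in> ispan (insert i I) f"
        then obtain Y1 a where Y1: "Y1 \<in> ispan I f" and Y: "Y = (\<lambda>x y. Y1 x y + a * f i x y)"
          using ispan_insert_decomp[OF insert(1,2)] by blast
        have "f i \<in> ispan I f" by (subst fi) (rule K1[rule_format])
        then show "Y \<in> ispan I f" unfolding Y by (intro ispan_add ispan_scale Y1)
      qed
    qed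
    then show ?thesis using K1 K2 by (intro exI[of _ K]) simp
  next
    case False
    then obtain c0 e0 where w0: "w c0 e0 \<noteq> 0" by auto
    then have c0: "c0 \<in> cfgs n d" and e0: "e0 \<in> cfgs n d" using wout by auto
    define \<phi> where "\<phi> Y = (Y c0 e0 - kern n d K Y c0 e0) / w c0 e0" for Y
    define K' where "K' a b c e = K a b c e + w a b * ((if c = c0 \<and> e = e0 then 1 else 0) - K c0 e0 c e) / w c0 e0" for a b c e
    have kK': "kern n d K' Y = (\<lambda>a b. kern n d K Y a b + \<phi> Y * w a b)" for Y
    proof (intro ext)
      fix a b
      show "kern n d K' Y a b = kern n d K Y a b + \<phi> Y * w a b"
      proof (cases "a \<in> cfgs n d \<and> b \<in> cfgs n d")
        case True
        have dd: "(\<Sum>c\<in>cfgs n d. \<Sum>e\<in>cfgs n d. (if c = c0 \<and> e = e0 then 1 else 0) * Y c e) = Y c0 e0"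
        proof -
          have "(\<Sum>c\<in>cfgs n d. \<Sum>e\<in>cfgs n d. (if c = c0 \<and> e = e0 then 1 else 0) * Y c e)
             = (\<Sum>c\<in>cfgs n d. if c = c0 then (\<Sum>e\<in>cfgs n d. (if e = e0 then 1 else 0) * Y c e) else 0)"
            by (rule sum.cong) auto
          also have "\<dots> = (\<Sum>e\<in>cfgs n d. (if e = e0 then 1 else 0) * Y c0 e)"
            using c0 by (simp add: sum.delta')
          also have "\<dots> = Y c0 e0" using e0 by (simp add: sum_ind)
          finally show ?thesis .
        qed
        define q where "q = w a b / w c0 e0"
        have pt: "K' a b c e * Y c e = K a b c e * Y c e + q * ((if c = c0 \<and> e = e0 then 1 else 0) * Y c e - K c0 e0 c e * Y c e)" for c e
          unfolding K'_def q_def using w0 by (cases "c = c0 \<and> e = e0") (simp_all add: field_simps)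
        have "kern n d K' Y a b = (\<Sum>c\<in>cfgs n d. \<Sum>e\<in>cfgs n d. K a b c e * Y c e + q * ((if c = c0 \<and> e = e0 then 1 else 0) * Y c e - K c0 e0 c e * Y c e))"
          using True unfolding kern_def pt by simp
        also have "\<dots> = (\<Sum>c\<in>cfgs n d. \<Sum>e\<in>cfgs n d. K a b c e * Y c e) +
            q * ((\<Sum>c\<in>cfgs n d. \<Sum>e\<in>cfgs n d. (if c = c0 \<and> e = e0 then 1 else 0) * Y c e)
              - (\<Sum>c\<in>cfgs n d. \<Sum>e\<in>cfgs n d. K c0 e0 c e * Y c e))"
          by (simp only: sum.distrib sum_subtractf flip: sum_distrib_left)
        also have "\<dots> = kern n d K Y a b + \<phi> Y * w a b"
          unfolding dd \<phi>_def kern_def q_def using True c0 e0 by simp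
        finally show ?thesis .
      next
        case False
        then show ?thesis using wout kops[OF False] unfolding kern_def by auto
      qed
    qed
    have wspan: "w \<in> ispan (insert i I) f"
    proof -
      have "(\<lambda>x y. f i x y + (-1) * kern n d K (f i) x y) \<in> ispan (insert i I) f"
        apply (intro ispan_add ispan_scale)
        using insert ispan_gen[of "insert i I" i f] apply simp
        using K1 ispan_mono[OF insert(1)] by blast
      then show ?thesis unfolding w_def by simp
    qed
    show ?thesis
    proof (rule exI[of _ K'], intro conjI allI ballI)
      fix Y
      have "(\<lambda>a b. kern n d K Y a b + \<phi> Y * w a b) \<in> ispan (insert i I) f"
        apply (intro ispan_add ispan_scale wspan)
        using K1 ispan_mono[OF insert(1)] by blast
      then show "kern n d K' Y \<in> ispan (insert i I) f" unfolding kK' .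
    next
      fix Y assume "Y \<in> ispan (insert i I) f"
      then obtain Y1 a where Y1: "Y1 \<in> ispan I f" and Y: "Y = (\<lambda>x y. Y1 x y + a * f i x y)"
        using ispan_insert_decomp[OF insert(1,2)] by blast
      have k1: "kern n d K' Y1 = Y1"
        unfolding kK' \<phi>_def using K2 Y1 by simp
      have k2: "kern n d K' (f i) = f i"
        unfolding kK' \<phi>_def using w0 by (auto intro!: ext simp: w_def)
      show "kern n d K' Y = Y" unfolding Y kern_lin k1 k2 ..
    qed
  qed
qed



definition vof :: "nat \<Rightarrow> (nat \<Rightarrow> nat) \<Rightarrow> cfg \<Rightarrow> (nat \<Rightarrow> nat)" where
  "vof n N' x = restrict (N' \<circ> x) {0..<n}"

definition gen :: "nat \<Rightarrow> nat \<Rightarrow> (nat \<Rightarrow> nat) \<Rightarrow> (nat \<Rightarrow> nat) \<Rightarrow> (nat \<Rightarrow> nat) \<Rightarrow> op" where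
  "gen n d N' u \<tau> = (\<lambda>c e. if c \<in> cfgs n d \<and> e \<in> cfgs n d \<and> vof n N' c = u \<and> e = pre n \<tau> c then 1 else 0)"

definition GI :: "nat \<Rightarrow> nat \<Rightarrow> (nat \<Rightarrow> nat) \<Rightarrow> ((nat \<Rightarrow> nat) \<times> (nat \<Rightarrow> nat)) set" where
  "GI n d N' = vof n N' ` cfgs n d \<times> {\<sigma>. \<sigma> permutes {0..<n}}"

definition genf :: "nat \<Rightarrow> nat \<Rightarrow> (nat \<Rightarrow> nat) \<Rightarrow> ((nat \<Rightarrow> nat) \<times> (nat \<Rightarrow> nat)) \<Rightarrow> op" where
  "genf n d N' = (\<lambda>(u, \<tau>). gen n d N' u \<tau>)"

definition Wset :: "nat \<Rightarrow> nat \<Rightarrow> (nat \<Rightarrow> nat) \<Rightarrow> op set" where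
  "Wset n d N' = {Z \<in> ops n d. (\<forall>\<sigma>. \<sigma> permutes {0..<n} \<longrightarrow>
      opmult n d Z (perm_op n d False N' \<sigma>) = opmult n d (perm_op n d False N' \<sigma>) Z) \<and>
      (\<forall>x y. Z x y \<noteq> 0 \<longrightarrow> vof n N' x = vof n N' y)}"

lemma vof_eq: "vof n N' x = vof n N' y \<longleftrightarrow> (\<forall>i<n. N' (x i) = N' (y i))"
  unfolding vof_def by (auto simp: restrict_def fun_eq_iff)

lemma vof_pre: assumes "\<sigma> permutes {0..<n}"
  shows "vof n N' (pre n \<sigma> x) = vof n N' (pre n \<sigma> y) \<longleftrightarrow> vof n N' x = vof n N' y"
  unfolding vof_eq
proof (intro iffI allI impI)
  fix i assume h: "\<forall>i<n. N' (pre n \<sigma> x i) = N' (pre n \<sigma> y i)" and i: "i < n"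
  have "inv \<sigma> i < n" using permutes_in_image[OF permutes_inv[OF assms]] i by auto
  then have "N' (x (\<sigma> (inv \<sigma> i))) = N' (y (\<sigma> (inv \<sigma> i)))" using h by (auto simp: pre_app)
  then show "N' (x i) = N' (y i)" using permutes_inverses(1)[OF assms] by simp
next
  fix i assume h: "\<forall>i<n. N' (x i) = N' (y i)" and i: "i < n"
  have "\<sigma> i < n" using permutes_in_image[OF assms] i by auto
  then show "N' (pre n \<sigma> x i) = N' (pre n \<sigma> y i)" using h i by (simp add: pre_app)
qed

lemma finite_GI[simp]: "finite (GI n d N')"
  unfolding GI_def by (simp add: finite_permutations)

lemma gen_ops: "genf n d N' i \<in> ops n d"
  unfolding genf_def gen_def ops_def by (auto split: prod.splits)

lemma card_Perms: "card {\<sigma>. \<sigma> permutes {0..<n}} = fact n"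
  by (rule card_permutations) auto

lemma sum_reindex_pre: assumes "\<sigma> permutes {0..<n}"
  shows "(\<Sum>c\<in>cfgs n d. g c) = (\<Sum>z\<in>cfgs n d. g (pre n \<sigma> z))"
  using sum.reindex_bij_betw[OF pre_bij[OF assms, of d], of g] by simp

lemma T_closed:
  assumes \<sigma>: "\<sigma> permutes {0..<n}" and Z: "Z \<in> ispan (GI n d N') (genf n d N')"
  shows "(\<lambda>a b. if a \<in> cfgs n d \<and> b \<in> cfgs n d \<and> vof n N' (pre n \<sigma> a) = v then Z (pre n \<sigma> a) b else 0)
     \<in> ispan (GI n d N') (genf n d N')"
proof -
  define T where "T Z = (\<lambda>a b. if a \<in> cfgs n d \<and> b \<in> cfgs n d \<and> vof n N' (pre n \<sigma> a) = v then Z (pre n \<sigma> a) b else 0)" for Z :: op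
  have Tg: "T (genf n d N' i) \<in> ispan (GI n d N') (genf n d N')" if i: "i \<in> GI n d N'" for i
  proof -
    obtain u \<tau> where iu: "i = (u, \<tau>)" and \<tau>: "\<tau> permutes {0..<n}" using i unfolding GI_def by auto
    show ?thesis
    proof (cases "u = v \<and> (\<exists>a0\<in>cfgs n d. vof n N' (pre n \<sigma> a0) = v)")
      case True
      then obtain a0 where a0: "a0 \<in> cfgs n d" "vof n N' (pre n \<sigma> a0) = v" and uv: "u = v" by auto
      have "T (genf n d N' i) = genf n d N' (vof n N' a0, \<sigma> \<circ> \<tau>)"
      proof (intro ext)
        fix a b
        show "T (genf n d N' i) a b = genf n d N' (vof n N' a0, \<sigma> \<circ> \<tau>) a b"
          unfolding T_def genf_def gen_def iu
          using a0 uv vof_pre[OF \<sigma>, of N' a a0] pre_in[OF \<sigma>, of a d] pre_comp[OF \<tau>, of \<sigma> a]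
          by auto
      qed
      moreover have "(vof n N' a0, \<sigma> \<circ> \<tau>) \<in> GI n d N'"
        unfolding GI_def using a0 \<sigma> \<tau> by (auto intro: permutes_compose)
      ultimately show ?thesis by (simp add: ispan_gen)
    next
      case False
      have "T (genf n d N' i) = (\<lambda>x y. 0)"
        unfolding T_def genf_def gen_def iu using False by (auto intro!: ext split: if_splits)
      then show ?thesis by (simp add: ispan_0)
    qed
  qed
  from Z obtain c where c: "Z = (\<lambda>x y. \<Sum>i\<in>GI n d N'. c i * genf n d N' i x y)" unfolding ispan_def by auto
  have "T Z = (\<lambda>x y. \<Sum>i\<in>GI n d N'. c i * T (genf n d N' i) x y)"
  proof (intro ext)
    fix x y
    show "T Z x y = (\<Sum>i\<in>GI n d N'. c i * T (genf n d N' i) x y)"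
      unfolding c T_def
      by (cases "x \<in> cfgs n d"; cases "y \<in> cfgs n d"; cases "vof n N' (pre n \<sigma> x) = v"; simp)
  qed
  also have "\<dots> \<in> ispan (GI n d N') (genf n d N')"
    by (rule ispan_sum) (auto intro: ispan_scale Tg)
  finally show ?thesis unfolding T_def .
qed



definition MM :: "nat \<Rightarrow> nat \<Rightarrow> (nat \<Rightarrow> nat) \<Rightarrow> (cfg \<Rightarrow> cfg \<Rightarrow> cfg \<Rightarrow> cfg \<Rightarrow> complex) \<Rightarrow> cfg \<Rightarrow> cfg \<Rightarrow> op" where
  "MM n d N' K b e = (\<lambda>x y. if x \<in> cfgs n d \<and> y \<in> cfgs n d \<and> vof n N' x = vof n N' y
     then (1 / fact n) * (\<Sum>\<sigma>\<in>{\<sigma>. \<sigma> permutes {0..<n}}. K (pre n \<sigma> x) b (pre n \<sigma> y) e) else 0)"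

lemma MM_inv:
  assumes \<tau>: "\<tau> permutes {0..<n}" and x: "x \<in> cfgs n d" and y: "y \<in> cfgs n d"
  shows "MM n d N' K b e (pre n \<tau> x) (pre n \<tau> y) = MM n d N' K b e x y"
proof -
  have "(\<Sum>\<sigma>\<in>{\<sigma>. \<sigma> permutes {0..<n}}. K (pre n \<sigma> (pre n \<tau> x)) b (pre n \<sigma> (pre n \<tau> y)) e)
      = (\<Sum>\<sigma>\<in>{\<sigma>. \<sigma> permutes {0..<n}}. K (pre n (\<tau> \<circ> \<sigma>) x) b (pre n (\<tau> \<circ> \<sigma>) y) e)"
    by (rule sum.cong) (auto simp: pre_comp)
  also have "\<dots> = (\<Sum>\<sigma>\<in>{\<sigma>. \<sigma> permutes {0..<n}}. K (pre n \<sigma> x) b (pre n \<sigma> y) e)"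
    using setum_permutations_compose_left[OF \<tau>, of "\<lambda>\<sigma>. K (pre n \<sigma> x) b (pre n \<sigma> y) e"] by simp
  finally show ?thesis
    unfolding MM_def using pre_in[OF \<tau> x] pre_in[OF \<tau> y] x y vof_pre[OF \<tau>, of N' x y] by simp
qed

lemma MM_W: "MM n d N' K b e \<in> Wset n d N'"
  unfolding Wset_def
proof (intro CollectI conjI allI impI)
  show "MM n d N' K b e \<in> ops n d" unfolding ops_def MM_def by auto
next
  fix x y assume "MM n d N' K b e x y \<noteq> 0"
  then show "vof n N' x = vof n N' y" unfolding MM_def by (auto split: if_splits)
next
  fix \<sigma> :: "nat \<Rightarrow> nat" assume \<sigma>: "\<sigma> permutes {0..<n}"
  show "opmult n d (MM n d N' K b e) (perm_op n d False N' \<sigma>) = opmult n d (perm_op n d False N' \<sigma>) (MM n d N' K b e)"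
  proof (intro ext)
    fix x y
    show "opmult n d (MM n d N' K b e) (perm_op n d False N' \<sigma>) x y = opmult n d (perm_op n d False N' \<sigma>) (MM n d N' K b e) x y"
    proof (cases "x \<in> cfgs n d \<and> y \<in> cfgs n d")
      case True
      then have x: "x \<in> cfgs n d" and y: "y \<in> cfgs n d" by auto
      have y': "pre n (inv \<sigma>) y \<in> cfgs n d" using pre_in[OF permutes_inv[OF \<sigma>] y] .
      show ?thesis
        using opmult_perm_right[OF \<sigma> x y] opmult_perm_left[OF \<sigma> x y]
          MM_inv[OF \<sigma> x y', of N' K b e] pre_inv1[OF \<sigma> y] by simp
    next
      case False then show ?thesis by (simp add: opmult_out)
    qed
  qed
qed

context
  fixes n d :: nat and N' :: "nat \<Rightarrow> nat" and K :: "cfg \<Rightarrow> cfg \<Rightarrow> cfg \<Rightarrow> cfg \<Rightarrow> complex"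
  assumes Kp: "\<And>Y. kern n d K Y \<in> ispan (GI n d N') (genf n d N')"
    and Kf: "\<And>Y. Y \<in> ispan (GI n d N') (genf n d N') \<Longrightarrow> kern n d K Y = Y"
begin

lemma claimS:
  assumes \<sigma>: "\<sigma> permutes {0..<n}" and a: "a \<in> cfgs n d" and b: "b \<in> cfgs n d"
  shows "(\<Sum>e\<in>cfgs n d. if vof n N' a = vof n N' e then K (pre n \<sigma> a) b (pre n \<sigma> e) e else 0) = (if a = b then 1 else 0)"
proof -
  define a' where "a' = pre n \<sigma> a"
  have a': "a' \<in> cfgs n d" unfolding a'_def using pre_in[OF \<sigma> a] .
  have \<sigma>i: "inv \<sigma> permutes {0..<n}" using permutes_inv[OF \<sigma>] .
  define g where "g = genf n d N' (vof n N' a', inv \<sigma>)"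
  have gi: "(vof n N' a', inv \<sigma>) \<in> GI n d N'" unfolding GI_def using a' \<sigma>i by auto
  have kg: "kern n d K g = g" unfolding g_def by (rule Kf, rule ispan_gen[OF finite_GI gi])
  have "kern n d K g a' b = (\<Sum>c\<in>cfgs n d. \<Sum>e\<in>cfgs n d. K a' b c e * g c e)"
    unfolding kern_def using a' b by simp
  also have "\<dots> = (\<Sum>c\<in>cfgs n d. if vof n N' c = vof n N' a' then K a' b c (pre n (inv \<sigma>) c) else 0)"
  proof (rule sum.cong[OF refl])
    fix c assume c: "c \<in> cfgs n d"
    have "(\<Sum>e\<in>cfgs n d. K a' b c e * g c e) = (\<Sum>e\<in>cfgs n d. if e = pre n (inv \<sigma>) c then (if vof n N' c = vof n N' a' then K a' b c e else 0) else 0)"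
      by (rule sum.cong[OF refl]) (auto simp: g_def genf_def gen_def c)
    also have "\<dots> = (if vof n N' c = vof n N' a' then K a' b c (pre n (inv \<sigma>) c) else 0)"
      using pre_in[OF \<sigma>i c] by (simp add: sum.delta')
    finally show "(\<Sum>e\<in>cfgs n d. K a' b c e * g c e) = (if vof n N' c = vof n N' a' then K a' b c (pre n (inv \<sigma>) c) else 0)" .
  qed
  also have "\<dots> = (\<Sum>e\<in>cfgs n d. if vof n N' (pre n \<sigma> e) = vof n N' a' then K a' b (pre n \<sigma> e) (pre n (inv \<sigma>) (pre n \<sigma> e)) else 0)"
    by (rule sum_reindex_pre[OF \<sigma>])
  also have "\<dots> = (\<Sum>e\<in>cfgs n d. if vof n N' a = vof n N' e then K (pre n \<sigma> a) b (pre n \<sigma> e) e else 0)"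
    by (rule sum.cong[OF refl]) (auto simp: a'_def vof_pre[OF \<sigma>] pre_inv2[OF \<sigma>])
  finally have 1: "kern n d K g a' b = \<dots>" .
  have 2: "g a' b = (if a = b then 1 else 0)"
    unfolding g_def genf_def gen_def a'_def using a b pre_in[OF \<sigma> a] pre_inv2[OF \<sigma> a] by auto
  show ?thesis using 1 2 kg by simp
qed

lemma L1:
  assumes a: "a \<in> cfgs n d" and b: "b \<in> cfgs n d"
  shows "(\<Sum>e\<in>cfgs n d. MM n d N' K b e a e) = (if a = b then 1 else 0)"
proof -
  let ?P = "{\<sigma>. \<sigma> permutes {0..<n}}"
  have "(\<Sum>e\<in>cfgs n d. MM n d N' K b e a e) = (\<Sum>e\<in>cfgs n d. \<Sum>\<sigma>\<in>?P. (1 / fact n) * (if vof n N' a = vof n N' e then K (pre n \<sigma> a) b (pre n \<sigma> e) e else 0))"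
    by (rule sum.cong[OF refl]) (auto simp: MM_def a sum_distrib_left)
  also have "\<dots> = (\<Sum>\<sigma>\<in>?P. (1 / fact n) * (\<Sum>e\<in>cfgs n d. (if vof n N' a = vof n N' e then K (pre n \<sigma> a) b (pre n \<sigma> e) e else 0)))"
    by (subst sum.swap) (simp add: sum_distrib_left)
  also have "\<dots> = (\<Sum>\<sigma>\<in>?P. (1 / fact n) * (if a = b then 1 else 0))"
    by (rule sum.cong[OF refl]) (simp add: claimS a b)
  also have "\<dots> = (if a = b then 1 else 0)" by (simp add: card_Perms)
  finally show ?thesis .
qed

definition Yv :: "op \<Rightarrow> (nat \<Rightarrow> nat) \<Rightarrow> (nat \<Rightarrow> nat) \<Rightarrow> op" where
  "Yv X \<sigma> v = (\<lambda>c e. if c \<in> cfgs n d \<and> e \<in> cfgs n d \<and> vof n N' c = v then X (pre n (inv \<sigma>) c) e else 0)"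

lemma claimS3:
  assumes \<sigma>: "\<sigma> permutes {0..<n}" and a: "a \<in> cfgs n d" and b: "b \<in> cfgs n d"
  shows "(\<Sum>e\<in>cfgs n d. \<Sum>z\<in>cfgs n d. if vof n N' a = vof n N' z then K (pre n \<sigma> a) b (pre n \<sigma> z) e * X z e else 0)
     = kern n d K (Yv X \<sigma> (vof n N' (pre n \<sigma> a))) (pre n \<sigma> a) b"
proof -
  define a' where "a' = pre n \<sigma> a"
  have a': "a' \<in> cfgs n d" unfolding a'_def using pre_in[OF \<sigma> a] .
  have "kern n d K (Yv X \<sigma> (vof n N' a')) a' b = (\<Sum>c\<in>cfgs n d. \<Sum>e\<in>cfgs n d. K a' b c e * Yv X \<sigma> (vof n N' a') c e)"
    unfolding kern_def using a' b by simp
  also have "\<dots> = (\<Sum>c\<in>cfgs n d. \<Sum>e\<in>cfgs n d. if vof n N' c = vof n N' a' then K a' b c e * X (pre n (inv \<sigma>) c) e else 0)"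
    by (intro sum.cong[OF refl]) (auto simp: Yv_def)
  also have "\<dots> = (\<Sum>z\<in>cfgs n d. \<Sum>e\<in>cfgs n d. if vof n N' (pre n \<sigma> z) = vof n N' a' then K a' b (pre n \<sigma> z) e * X (pre n (inv \<sigma>) (pre n \<sigma> z)) e else 0)"
    by (rule sum_reindex_pre[OF \<sigma>])
  also have "\<dots> = (\<Sum>z\<in>cfgs n d. \<Sum>e\<in>cfgs n d. if vof n N' a = vof n N' z then K a' b (pre n \<sigma> z) e * X z e else 0)"
    by (intro sum.cong[OF refl]) (auto simp: a'_def vof_pre[OF \<sigma>] pre_inv2[OF \<sigma>])
  also have "\<dots> = (\<Sum>e\<in>cfgs n d. \<Sum>z\<in>cfgs n d. if vof n N' a = vof n N' z then K a' b (pre n \<sigma> z) e * X z e else 0)"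
    by (rule sum.swap)
  finally show ?thesis unfolding a'_def by simp
qed

definition Phi :: "op \<Rightarrow> op" where
  "Phi X = (\<lambda>a b. if a \<in> cfgs n d \<and> b \<in> cfgs n d then (\<Sum>e\<in>cfgs n d. \<Sum>z\<in>cfgs n d. MM n d N' K b e a z * X z e) else 0)"

lemma L3: "Phi X \<in> ispan (GI n d N') (genf n d N')"
proof -
  let ?P = "{\<sigma>. \<sigma> permutes {0..<n}}"
  let ?V = "vof n N' ` cfgs n d"
  define T where "T \<sigma> v = (\<lambda>a b. if a \<in> cfgs n d \<and> b \<in> cfgs n d \<and> vof n N' (pre n \<sigma> a) = v then kern n d K (Yv X \<sigma> v) (pre n \<sigma> a) b else 0)" for \<sigma> v
  have "Phi X = (\<lambda>a b. (1 / fact n) * (\<Sum>\<sigma>\<in>?P. \<Sum>v\<in>?V. T \<sigma> v a b))"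
  proof (intro ext)
    fix a b
    show "Phi X a b = (1 / fact n) * (\<Sum>\<sigma>\<in>?P. \<Sum>v\<in>?V. T \<sigma> v a b)"
    proof (cases "a \<in> cfgs n d \<and> b \<in> cfgs n d")
      case True
      then have a: "a \<in> cfgs n d" and b: "b \<in> cfgs n d" by auto
      have "Phi X a b = (\<Sum>e\<in>cfgs n d. \<Sum>z\<in>cfgs n d. \<Sum>\<sigma>\<in>?P. (1 / fact n) * (if vof n N' a = vof n N' z then K (pre n \<sigma> a) b (pre n \<sigma> z) e * X z e else 0))"
        unfolding Phi_def using a b
        by (auto intro!: sum.cong simp: MM_def sum_distrib_left sum_distrib_right mult.assoc)
      also have "\<dots> = (1 / fact n) * (\<Sum>\<sigma>\<in>?P. \<Sum>e\<in>cfgs n d. \<Sum>z\<in>cfgs n d. (if vof n N' a = vof n N' z then K (pre n \<sigma> a) b (pre n \<sigma> z) e * X z e else 0))"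
      proof -
        have "(\<Sum>e\<in>cfgs n d. \<Sum>z\<in>cfgs n d. \<Sum>\<sigma>\<in>?P. (1 / fact n) * (if vof n N' a = vof n N' z then K (pre n \<sigma> a) b (pre n \<sigma> z) e * X z e else 0))
          = (\<Sum>e\<in>cfgs n d. \<Sum>\<sigma>\<in>?P. \<Sum>z\<in>cfgs n d. (1 / fact n) * (if vof n N' a = vof n N' z then K (pre n \<sigma> a) b (pre n \<sigma> z) e * X z e else 0))"
          by (rule sum.cong[OF refl]) (rule sum.swap)
        also have "\<dots> = (\<Sum>\<sigma>\<in>?P. \<Sum>e\<in>cfgs n d. \<Sum>z\<in>cfgs n d. (1 / fact n) * (if vof n N' a = vof n N' z then K (pre n \<sigma> a) b (pre n \<sigma> z) e * X z e else 0))"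
          by (rule sum.swap)
        finally show ?thesis by (simp add: sum_distrib_left)
      qed
      also have "\<dots> = (1 / fact n) * (\<Sum>\<sigma>\<in>?P. kern n d K (Yv X \<sigma> (vof n N' (pre n \<sigma> a))) (pre n \<sigma> a) b)"
        by (simp add: claimS3 a b)
      also have "\<dots> = (1 / fact n) * (\<Sum>\<sigma>\<in>?P. \<Sum>v\<in>?V. T \<sigma> v a b)"
      proof -
        have "kern n d K (Yv X \<sigma> (vof n N' (pre n \<sigma> a))) (pre n \<sigma> a) b = (\<Sum>v\<in>?V. T \<sigma> v a b)" if \<sigma>: "\<sigma> \<in> ?P" for \<sigma>
        proof -
          have inV: "vof n N' (pre n \<sigma> a) \<in> ?V" using pre_in[of \<sigma> n a d] \<sigma> a by auto
          have "(\<Sum>v\<in>?V. T \<sigma> v a b) = (\<Sum>v\<in>?V. if vof n N' (pre n \<sigma> a) = v then kern n d K (Yv X \<sigma> v) (pre n \<sigma> a) b else 0)"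
            unfolding T_def using a b by simp
          also have "\<dots> = kern n d K (Yv X \<sigma> (vof n N' (pre n \<sigma> a))) (pre n \<sigma> a) b"
            using inV by (simp add: sum.delta)
          finally show ?thesis by simp
        qed
        then show ?thesis by simp
      qed
      finally show ?thesis .
    next
      case False
      then show ?thesis unfolding Phi_def T_def by auto
    qed
  qed
  also have "\<dots> \<in> ispan (GI n d N') (genf n d N')"
    apply (rule ispan_scale)
    apply (rule ispan_sum, simp add: finite_permutations)
    apply (rule ispan_sum, simp)
    unfolding T_def
    apply (rule T_closed)
    by (auto simp: Kp)
  finally show ?thesis .
qed

lemma DC_K:
  assumes X: "X \<in> ops n d" and comm: "\<And>Z. Z \<in> Wset n d N' \<Longrightarrow> opmult n d X Z = opmult n d Z X"
  shows "X \<in> ispan (GI n d N') (genf n d N')"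
proof -
  have "X = Phi X"
  proof (intro ext)
    fix a b
    show "X a b = Phi X a b"
    proof (cases "a \<in> cfgs n d \<and> b \<in> cfgs n d")
      case True
      then have a: "a \<in> cfgs n d" and b: "b \<in> cfgs n d" by auto
      have "(\<Sum>z\<in>cfgs n d. X a z * (if z = b then 1 else 0)) = (\<Sum>z\<in>cfgs n d. if z = b then X a z else 0)"
        by (rule sum.cong) auto
      then have "X a b = (\<Sum>z\<in>cfgs n d. X a z * (if z = b then 1 else 0))"
        using b by (simp add: sum.delta')
      also have "\<dots> = (\<Sum>z\<in>cfgs n d. X a z * (\<Sum>e\<in>cfgs n d. MM n d N' K b e z e))"
        by (rule sum.cong[OF refl]) (simp add: L1 b)
      also have "\<dots> = (\<Sum>e\<in>cfgs n d. \<Sum>z\<in>cfgs n d. X a z * MM n d N' K b e z e)"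
        unfolding sum_distrib_left by (rule sum.swap)
      also have "\<dots> = (\<Sum>e\<in>cfgs n d. opmult n d X (MM n d N' K b e) a e)"
        by (rule sum.cong[OF refl]) (simp add: opmult_in a)
      also have "\<dots> = (\<Sum>e\<in>cfgs n d. opmult n d (MM n d N' K b e) X a e)"
        using comm[OF MM_W] by simp
      also have "\<dots> = Phi X a b"
        unfolding Phi_def using a b by (auto intro!: sum.cong simp: opmult_in)
      finally show ?thesis .
    next
      case False
      then show ?thesis using X unfolding Phi_def ops_def by auto
    qed
  qed
  then show ?thesis by (metis L3)
qed

end

lemma DC:
  assumes X: "X \<in> ops n d" and comm: "\<And>Z. Z \<in> Wset n d N' \<Longrightarrow> opmult n d X Z = opmult n d Z X"
  shows "X \<in> ispan (GI n d N') (genf n d N')"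
proof -
  obtain K where K: "\<forall>Y. kern n d K Y \<in> ispan (GI n d N') (genf n d N')"
    "\<forall>Y \<in> ispan (GI n d N') (genf n d N'). kern n d K Y = Y"
    using proj_exists[of "GI n d N'" "genf n d N'" n d] gen_ops by auto
  show ?thesis
    by (rule DC_K[where K=K]) (use K X comm in auto)
qed



definition commutes :: "nat \<Rightarrow> nat \<Rightarrow> op \<Rightarrow> op \<Rightarrow> bool" where
  "commutes n d X Y \<longleftrightarrow> opmult n d X Y = opmult n d Y X"

lemma poly_comm:
  fixes B D :: "nat \<Rightarrow> nat \<Rightarrow> complex"
  assumes S: "infinite S" and comm: "\<And>t. t \<in> S \<Longrightarrow> commutes n d X (tpow n d (\<lambda>i j. B i j + t * D i j))"
  shows "commutes n d X (tpow n d (\<lambda>i j. B i j + t * D i j))"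
  unfolding commutes_def
proof (intro ext)
  fix x y
  show "opmult n d X (tpow n d (\<lambda>i j. B i j + t * D i j)) x y = opmult n d (tpow n d (\<lambda>i j. B i j + t * D i j)) X x y"
  proof (cases "x \<in> cfgs n d \<and> y \<in> cfgs n d")
    case True
    then have x: "x \<in> cfgs n d" and y: "y \<in> cfgs n d" by auto
    define p where "p = (\<Sum>z\<in>cfgs n d. smult (X x z) (\<Prod>i<n. [:B (z i) (y i), D (z i) (y i):]))
       - (\<Sum>z\<in>cfgs n d. smult (X z y) (\<Prod>i<n. [:B (x i) (z i), D (x i) (z i):]))"
    have ev: "poly p s = opmult n d X (tpow n d (\<lambda>i j. B i j + s * D i j)) x y - opmult n d (tpow n d (\<lambda>i j. B i j + s * D i j)) X x y" for s
      unfolding p_def using x y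
      by (simp add: poly_sum poly_prod opmult_in tpow_def mult.commute[of s] mult.commute[of "X _ y"] cong: sum.cong)
    have "p = 0"
    proof (rule ccontr)
      assume "p \<noteq> 0"
      then have "finite {s. poly p s = 0}" by (rule poly_roots_finite)
      moreover have "S \<subseteq> {s. poly p s = 0}" using comm ev unfolding commutes_def by auto
      ultimately show False using S finite_subset by blast
    qed
    then show ?thesis using ev[of t] by simp
  next
    case False then show ?thesis by (simp add: opmult_out)
  qed
qed

lemma opmult_scale_r: "opmult n d X (\<lambda>x y. c * Y x y) = (\<lambda>x y. c * opmult n d X Y x y)"
  unfolding opmult_def by (auto intro!: ext simp: sum_distrib_left mult.left_commute)

lemma opmult_scale_l: "opmult n d (\<lambda>x y. c * Y x y) X = (\<lambda>x y. c * opmult n d Y X x y)"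
  unfolding opmult_def by (auto intro!: ext simp: sum_distrib_left mult.assoc)

lemma opmult_sum_r: "opmult n d X (\<lambda>x y. \<Sum>j\<in>J. Y j x y) = (\<lambda>x y. \<Sum>j\<in>J. opmult n d X (Y j) x y)"
  unfolding opmult_def by (auto intro!: ext simp: sum_distrib_left intro: sum.swap)

lemma opmult_sum_l: "opmult n d (\<lambda>x y. \<Sum>j\<in>J. Y j x y) X = (\<lambda>x y. \<Sum>j\<in>J. opmult n d (Y j) X x y)"
  unfolding opmult_def by (auto intro!: ext simp: sum_distrib_right intro: sum.swap)

lemma commutes_lin: "(\<And>j. j \<in> J \<Longrightarrow> commutes n d X (Y j)) \<Longrightarrow> commutes n d X (\<lambda>x y. \<Sum>j\<in>J. c j * Y j x y)"
  unfolding commutes_def opmult_sum_r opmult_sum_l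
proof -
  assume h: "\<And>j. j \<in> J \<Longrightarrow> opmult n d X (Y j) = opmult n d (Y j) X"
  have "opmult n d X (\<lambda>x y. c j * Y j x y) = opmult n d (\<lambda>x y. c j * Y j x y) X" if "j \<in> J" for j
    unfolding opmult_scale_r opmult_scale_l using h[OF that] by simp
  then show "(\<lambda>x y. \<Sum>j\<in>J. opmult n d X (\<lambda>x y. c j * Y j x y) x y) = (\<lambda>x y. \<Sum>j\<in>J. opmult n d (\<lambda>x y. c j * Y j x y) X x y)"
    by (auto intro!: ext sum.cong)
qed

lemma commutes_scale: "commutes n d X Y \<Longrightarrow> commutes n d X (\<lambda>x y. c * Y x y)"
  unfolding commutes_def opmult_scale_r opmult_scale_l by simp



lemma ab_le_nu:
  fixes v :: "nat \<Rightarrow> complex"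
  assumes "i < d" "j < d"
  shows "cmod (v i) * cmod (v j) \<le> (\<Sum>k<d. (cmod (v k))\<^sup>2)"
proof -
  let ?a = "cmod (v i)" and ?b = "cmod (v j)"
  have a: "?a\<^sup>2 \<le> (\<Sum>k<d. (cmod (v k))\<^sup>2)"
    using member_le_sum[of i "{..<d}" "\<lambda>k. (cmod (v k))\<^sup>2"] assms by simp
  have b: "?b\<^sup>2 \<le> (\<Sum>k<d. (cmod (v k))\<^sup>2)"
    using member_le_sum[of j "{..<d}" "\<lambda>k. (cmod (v k))\<^sup>2"] assms by simp
  have "0 \<le> (?a - ?b)\<^sup>2" by simp
  then have "2 * (?a * ?b) \<le> ?a\<^sup>2 + ?b\<^sup>2" by (simp add: power2_diff)
  then show ?thesis using a b by linarith
qed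

lemma psd_bound:
  fixes H :: "nat \<Rightarrow> nat \<Rightarrow> complex" and v :: "nat \<Rightarrow> complex" and s :: real
  assumes s: "s \<ge> (\<Sum>i<d. \<Sum>j<d. cmod (H i j))"
  shows "0 \<le> Re (\<Sum>i<d. \<Sum>j<d. cnj (v i) * (H i j + of_real s * (if i = j \<and> i < d then 1 else 0)) * v j)"
proof -
  define \<nu> where "\<nu> = (\<Sum>k<d. (cmod (v k))\<^sup>2)"
  have nu0: "\<nu> \<ge> 0" unfolding \<nu>_def by (simp add: sum_nonneg)
  define QH where "QH = (\<Sum>i<d. \<Sum>j<d. cnj (v i) * H i j * v j)"
  have inner: "(\<Sum>j<d. cnj (v i) * (H i j + of_real s * (if i = j \<and> i < d then 1 else 0)) * v j)
      = (\<Sum>j<d. cnj (v i) * H i j * v j) + of_real s * (cnj (v i) * v i)" if i: "i < d" for i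
  proof -
    have "(\<Sum>j<d. cnj (v i) * (H i j + of_real s * (if i = j \<and> i < d then 1 else 0)) * v j)
       = (\<Sum>j<d. cnj (v i) * H i j * v j + (if j = i then of_real s * (cnj (v i) * v j) else 0))"
      by (rule sum.cong) (auto simp: ring_distribs i)
    also have "\<dots> = (\<Sum>j<d. cnj (v i) * H i j * v j) + of_real s * (cnj (v i) * v i)"
      using i by (simp add: sum.distrib sum.delta)
    finally show ?thesis .
  qed
  have split: "(\<Sum>i<d. \<Sum>j<d. cnj (v i) * (H i j + of_real s * (if i = j \<and> i < d then 1 else 0)) * v j)
      = QH + of_real s * (\<Sum>i<d. cnj (v i) * v i)"
  proof -
    have "(\<Sum>i<d. \<Sum>j<d. cnj (v i) * (H i j + of_real s * (if i = j \<and> i < d then 1 else 0)) * v j)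
       = (\<Sum>i<d. (\<Sum>j<d. cnj (v i) * H i j * v j) + of_real s * (cnj (v i) * v i))"
      by (rule sum.cong[OF refl]) (rule inner, simp)
    then show ?thesis unfolding QH_def by (simp add: sum.distrib sum_distrib_left)
  qed
  have nu: "Re (of_real s * (\<Sum>i<d. cnj (v i) * v i)) = s * \<nu>"
  proof -
    have "(\<Sum>i<d. cnj (v i) * v i) = of_real \<nu>"
      unfolding \<nu>_def of_real_sum
      by (rule sum.cong[OF refl]) (simp add: complex_norm_square[symmetric] mult.commute)
    then show ?thesis by simp
  qed
  have bound: "cmod QH \<le> (\<Sum>i<d. \<Sum>j<d. cmod (H i j)) * \<nu>"
  proof -
    have "cmod QH \<le> (\<Sum>i<d. cmod (\<Sum>j<d. cnj (v i) * H i j * v j))"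
      unfolding QH_def by (rule norm_sum)
    also have "\<dots> \<le> (\<Sum>i<d. \<Sum>j<d. cmod (cnj (v i) * H i j * v j))"
      by (rule sum_mono) (rule norm_sum)
    also have "\<dots> = (\<Sum>i<d. \<Sum>j<d. cmod (H i j) * (cmod (v i) * cmod (v j)))"
      by (simp add: norm_mult mult_ac)
    also have "\<dots> \<le> (\<Sum>i<d. \<Sum>j<d. cmod (H i j) * \<nu>)"
      unfolding \<nu>_def
      by (intro sum_mono mult_left_mono ab_le_nu) auto
    also have "\<dots> = (\<Sum>i<d. \<Sum>j<d. cmod (H i j)) * \<nu>"
      by (simp add: sum_distrib_right)
    finally show ?thesis .
  qed
  have "Re QH \<ge> - cmod QH" using abs_Re_le_cmod[of QH] by linarith
  moreover have "(\<Sum>i<d. \<Sum>j<d. cmod (H i j)) * \<nu> \<le> s * \<nu>" using s nu0 by (rule mult_right_mono)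
  moreover have eq: "Re (QH + of_real s * (\<Sum>i<d. cnj (v i) * v i)) = Re QH + s * \<nu>"
    using nu by (simp only: plus_complex.sel)
  ultimately show ?thesis unfolding split eq using bound by linarith
qed



lemma tpow_cong: "(\<And>i j. i < d \<Longrightarrow> j < d \<Longrightarrow> A i j = B i j) \<Longrightarrow> tpow n d A = tpow n d B"
  unfolding tpow_def by (auto intro!: ext prod.cong simp: cfgs_in)

lemma herm_comm:
  assumes d: "d \<ge> 1"
    and comm: "\<And>\<rho>. density d \<rho> \<Longrightarrow> commutes_number d N' \<rho> \<Longrightarrow> commutes n d X (tpow n d \<rho>)"
    and H0: "\<And>i j. i \<ge> d \<or> j \<ge> d \<Longrightarrow> H i j = 0" and Hh: "\<And>i j. H j i = cnj (H i j)"
    and Hc: "\<And>a b. a < d \<Longrightarrow> b < d \<Longrightarrow> H a b \<noteq> 0 \<Longrightarrow> N' a = N' b"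
  shows "commutes n d X (tpow n d H)"
proof -
  define Id where "Id i j = (if i = j \<and> i < d then 1 else (0::complex))" for i j
  define s0 where "s0 = 1 + (\<Sum>i<d. \<Sum>j<d. cmod (H i j))"
  have hii: "H i i = of_real (Re (H i i))" for i
  proof -
    have "Im (H i i) = 0" using arg_cong[OF Hh[of i i], of Im] by simp
    then show ?thesis by (simp add: complex_eq_iff)
  qed
  have diag_le: "(\<Sum>i<d. cmod (H i i)) \<le> (\<Sum>i<d. \<Sum>j<d. cmod (H i j))"
    by (rule sum_mono) (rule member_le_sum, auto)
  have main: "commutes n d X (tpow n d (\<lambda>i j. H i j + t * Id i j))" if t: "t \<in> of_real ` {s0..}" for t
  proof -
    obtain s where s: "s \<ge> s0" and ts: "t = of_real s" using t by auto
    define M where "M i j = H i j + t * Id i j" for i j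
    define r where "r = (\<Sum>i<d. Re (H i i)) + s * d"
    have tr: "(\<Sum>i<d. M i i) = of_real r"
    proof -
      have "(\<Sum>i<d. M i i) = (\<Sum>i<d. of_real (Re (H i i)) + of_real s)"
        by (rule sum.cong[OF refl]) (simp add: M_def Id_def ts hii[symmetric])
      then show ?thesis by (simp add: r_def sum.distrib)
    qed
    have "- (\<Sum>i<d. Re (H i i)) \<le> (\<Sum>i<d. cmod (H i i))"
    proof -
      have nr: "\<And>z::complex. - Re z \<le> cmod z" using abs_Re_le_cmod abs_le_D2 by blast
      show ?thesis unfolding sum_negf[symmetric] by (rule sum_mono) (rule nr)
    qed
    moreover have "s * d \<ge> s"
    proof -
      have s0g: "s0 \<ge> 1" unfolding s0_def by (simp add: sum_nonneg)
      have "s * real d \<ge> s * 1" using d s s0g by (intro mult_left_mono) auto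
      then show ?thesis by simp
    qed
    ultimately have r1: "r \<ge> 1" unfolding r_def using s s0_def diag_le by linarith
    define \<rho> where "\<rho> i j = M i j / of_real r" for i j
    have M0: "M i j = 0" if "i \<ge> d \<or> j \<ge> d" for i j using that H0 unfolding M_def Id_def by auto
    have Mh: "M j i = cnj (M i j)" for i j unfolding M_def Id_def ts by (subst Hh[of i j]) simp
    have dens: "density d \<rho>"
      unfolding density_def
    proof (intro conjI allI impI)
      fix i j assume "d \<le> i \<or> d \<le> j"
      then show "\<rho> i j = 0" unfolding \<rho>_def using M0 by auto
    next
      fix i j show "\<rho> j i = cnj (\<rho> i j)" unfolding \<rho>_def by (subst Mh[of i j]) simp
    next
      fix v :: "nat \<Rightarrow> complex"
      have "s \<ge> (\<Sum>i<d. \<Sum>j<d. cmod (H i j))" using s unfolding s0_def by linarith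
      from psd_bound[OF this, of v]
      have "0 \<le> Re (\<Sum>i<d. \<Sum>j<d. cnj (v i) * M i j * v j)" unfolding M_def Id_def ts .
      moreover have "(\<Sum>i<d. \<Sum>j<d. cnj (v i) * \<rho> i j * v j) = (\<Sum>i<d. \<Sum>j<d. cnj (v i) * M i j * v j) / of_real r"
        unfolding \<rho>_def by (simp add: sum_divide_distrib)
      ultimately show "0 \<le> Re (\<Sum>i<d. \<Sum>j<d. cnj (v i) * \<rho> i j * v j)"
        using r1 by (simp add: Re_divide_of_real)
    next
      show "(\<Sum>i<d. \<rho> i i) = 1" unfolding \<rho>_def using tr r1
        by (simp add: sum_divide_distrib[symmetric])
    qed
    have cn: "commutes_number d N' \<rho>"
      unfolding commutes_number_def
    proof (intro allI impI)
      fix a b assume a: "a < d" and b: "b < d"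
      show "\<rho> a b * of_nat (N' b) = of_nat (N' a) * \<rho> a b"
      proof (cases "N' a = N' b")
        case True then show ?thesis by simp
      next
        case False
        then have "H a b = 0" "a \<noteq> b" using Hc a b by auto
        then show ?thesis unfolding \<rho>_def M_def Id_def by simp
      qed
    qed
    have c1: "commutes n d X (tpow n d \<rho>)" by (rule comm[OF dens cn])
    have "tpow n d M = (\<lambda>x y. (of_real r) ^ n * tpow n d \<rho> x y)"
    proof (intro ext)
      fix x y
      have "(\<Prod>i<n. M (x i) (y i)) = (\<Prod>i<n. of_real r * \<rho> (x i) (y i))"
        unfolding \<rho>_def using r1 by (intro prod.cong) auto
      then show "tpow n d M x y = (of_real r) ^ n * tpow n d \<rho> x y"
        unfolding tpow_def by (simp add: prod.distrib)
    qed
    then have "commutes n d X (tpow n d M)" using commutes_scale[OF c1] by simp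
    then show ?thesis unfolding M_def .
  qed
  have inf: "infinite (of_real ` {s0..} :: complex set)"
  proof
    assume "finite (of_real ` {s0..} :: complex set)"
    moreover have "inj_on (of_real :: real \<Rightarrow> complex) {s0..}"
      by (rule inj_on_subset[OF inj_of_real subset_UNIV])
    ultimately have "finite {s0..}" by (rule finite_imageD)
    then show False using infinite_Ici[of s0] by simp
  qed
  have "commutes n d X (tpow n d (\<lambda>i j. H i j + 0 * Id i j))"
    by (rule poly_comm[OF inf main])
  then show ?thesis by simp
qed

lemma gen_comm:
  assumes d: "d \<ge> 1"
    and comm: "\<And>\<rho>. density d \<rho> \<Longrightarrow> commutes_number d N' \<rho> \<Longrightarrow> commutes n d X (tpow n d \<rho>)"
    and Ac: "\<And>a b. a < d \<Longrightarrow> b < d \<Longrightarrow> A a b \<noteq> 0 \<Longrightarrow> N' a = N' b"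
  shows "commutes n d X (tpow n d A)"
proof -
  define Hh where "Hh i j = (if i < d \<and> j < d then (A i j + cnj (A j i)) / 2 else 0)" for i j
  define Kk where "Kk i j = (if i < d \<and> j < d then (A i j - cnj (A j i)) / (2 * \<i>) else 0)" for i j
  have main: "commutes n d X (tpow n d (\<lambda>i j. Hh i j + t * Kk i j))" if trg: "t \<in> range of_real" for t
  proof -
    obtain s where ts: "t = of_real s" using trg by (rule rangeE)
    show ?thesis
    proof (rule herm_comm[OF d comm])
      fix i j :: nat assume "i \<ge> d \<or> j \<ge> d"
      then show "Hh i j + t * Kk i j = 0" unfolding Hh_def Kk_def by auto
    next
      fix i j :: nat
      show "Hh j i + t * Kk j i = cnj (Hh i j + t * Kk i j)"
        unfolding Hh_def Kk_def ts by (auto simp: field_simps)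
    next
      fix a b assume a: "a < d" and b: "b < d" and ne: "Hh a b + t * Kk a b \<noteq> 0"
      show "N' a = N' b"
      proof (rule ccontr)
        assume "N' a \<noteq> N' b"
        then have "A a b = 0" "A b a = 0" using Ac a b by metis+
        then show False using ne a b unfolding Hh_def Kk_def by auto
      qed
    qed auto
  qed
  have inf: "infinite (range (of_real :: real \<Rightarrow> complex))"
  proof
    assume "finite (range (of_real :: real \<Rightarrow> complex))"
    then have "finite (UNIV :: real set)" using finite_imageD inj_of_real by blast
    then show False using infinite_UNIV_char_0 by blast
  qed
  have "commutes n d X (tpow n d (\<lambda>i j. Hh i j + \<i> * Kk i j))"
    by (rule poly_comm[OF inf main])
  moreover have "tpow n d (\<lambda>i j. Hh i j + \<i> * Kk i j) = tpow n d A"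
    by (rule tpow_cong) (auto simp: Hh_def Kk_def field_simps)
  ultimately show ?thesis by simp
qed



lemma ryser_aux:
  fixes m :: "nat \<Rightarrow> nat \<Rightarrow> complex"
  assumes I: "finite I"
  shows "(\<Sum>h\<in>{h \<in> (I \<rightarrow>\<^sub>E I). h ` I = I}. \<Prod>i\<in>I. m i (h i)) =
    (\<Sum>T\<in>Pow I. (-1) ^ (card I - card T) * (\<Prod>i\<in>I. \<Sum>k\<in>T. m i k))"
proof -
  define f where "f S = (\<Sum>h\<in>{h \<in> (I \<rightarrow>\<^sub>E S). h ` I = S}. \<Prod>i\<in>I. m i (h i))" for S
  define g where "g S = (\<Prod>i\<in>I. \<Sum>k\<in>S. m i k)" for S
  have g: "g S = sum f (Pow S)" if S: "finite S" for S
  proof -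
    have "g S = (\<Sum>h\<in>(I \<rightarrow>\<^sub>E S). \<Prod>i\<in>I. m i (h i))"
      unfolding g_def using I S by (simp add: prod_sum_PiE)
    also have "\<dots> = (\<Sum>T\<in>Pow S. \<Sum>h\<in>{h \<in> (I \<rightarrow>\<^sub>E S). h ` I = T}. \<Prod>i\<in>I. m i (h i))"
      by (rule sum.group[symmetric]) (use I S in \<open>auto simp: finite_PiE\<close>)
    also have "\<dots> = sum f (Pow S)"
    proof (rule sum.cong[OF refl])
      fix T assume "T \<in> Pow S"
      then have "{h \<in> (I \<rightarrow>\<^sub>E S). h ` I = T} = {h \<in> (I \<rightarrow>\<^sub>E T). h ` I = T}" by (auto simp: PiE_def Pi_def)
      then show "(\<Sum>h\<in>{h \<in> (I \<rightarrow>\<^sub>E S). h ` I = T}. \<Prod>i\<in>I. m i (h i)) = f T" unfolding f_def by simp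
    qed
    finally show ?thesis .
  qed
  have "f I = (\<Sum>T\<in>Pow I. (-1) ^ (card I - card T) * g T)"
    by (rule inclusion_exclusion_mobius[OF g I])
  then show ?thesis unfolding f_def g_def .
qed

lemma prod_ind: "finite A \<Longrightarrow> (\<Prod>i\<in>A. if P i then 1 else 0) = (if \<forall>i\<in>A. P i then 1 else (0::complex))"
  by (induction A rule: finite_induct) auto

lemma ryser:
  fixes m :: "nat \<Rightarrow> nat \<Rightarrow> complex"
  shows "(\<Sum>T\<in>Pow {..<n}. (-1) ^ (n - card T) * (\<Prod>i<n. \<Sum>k\<in>T. m i k)) =
     (\<Sum>\<sigma>\<in>{\<sigma>. \<sigma> permutes {0..<n}}. \<Prod>i<n. m i (\<sigma> i))"
proof -
  let ?I = "{..<n}"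
  have P: "{\<sigma>. \<sigma> permutes {0..<n}} = {\<sigma>. \<sigma> permutes ?I}" by (simp add: atLeast0LessThan)
  have bij: "bij_betw (\<lambda>\<sigma>. restrict \<sigma> ?I) {\<sigma>. \<sigma> permutes ?I} {h \<in> (?I \<rightarrow>\<^sub>E ?I). h ` ?I = ?I}"
  proof (rule bij_betwI[where g="\<lambda>h x. if x \<in> ?I then h x else x"])
    show "(\<lambda>\<sigma>. restrict \<sigma> ?I) \<in> {\<sigma>. \<sigma> permutes ?I} \<rightarrow> {h \<in> (?I \<rightarrow>\<^sub>E ?I). h ` ?I = ?I}"
      using permutes_image permutes_in_image by fastforce
    show "(\<lambda>h x. if x \<in> ?I then h x else x) \<in> {h \<in> (?I \<rightarrow>\<^sub>E ?I). h ` ?I = ?I} \<rightarrow> {\<sigma>. \<sigma> permutes ?I}"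
    proof
      fix h assume h: "h \<in> {h \<in> (?I \<rightarrow>\<^sub>E ?I). h ` ?I = ?I}"
      have "inj_on h ?I" using h by (intro finite_surj_inj) auto
      then have "bij_betw (\<lambda>x. if x \<in> ?I then h x else x) ?I ?I"
        using h unfolding bij_betw_def by (auto simp: inj_on_def image_def)
      then have "(\<lambda>x. if x \<in> ?I then h x else x) permutes ?I"
        by (rule bij_imp_permutes) simp
      then show "(\<lambda>x. if x \<in> ?I then h x else x) \<in> {\<sigma>. \<sigma> permutes ?I}" by simp
    qed
    fix \<sigma> assume "\<sigma> \<in> {\<sigma>. \<sigma> permutes ?I}"
    then show "(\<lambda>x. if x \<in> ?I then restrict \<sigma> ?I x else x) = \<sigma>"
      by (auto intro!: ext simp: permutes_not_in)
  next
    fix h assume "h \<in> {h \<in> (?I \<rightarrow>\<^sub>E ?I). h ` ?I = ?I}"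
    then show "restrict (\<lambda>x. if x \<in> ?I then h x else x) ?I = h"
      by (auto intro!: ext simp: PiE_def extensional_def)
  qed
  have "(\<Sum>\<sigma>\<in>{\<sigma>. \<sigma> permutes ?I}. \<Prod>i<n. m i (\<sigma> i)) = (\<Sum>\<sigma>\<in>{\<sigma>. \<sigma> permutes ?I}. \<Prod>i<n. m i (restrict \<sigma> ?I i))"
    by (intro sum.cong prod.cong) auto
  also have "\<dots> = (\<Sum>h\<in>{h \<in> (?I \<rightarrow>\<^sub>E ?I). h ` ?I = ?I}. \<Prod>i<n. m i (h i))"
    by (rule sum.reindex_bij_betw[OF bij])
  also have "\<dots> = (\<Sum>T\<in>Pow {..<n}. (-1) ^ (n - card T) * (\<Prod>i<n. \<Sum>k\<in>T. m i k))"
    using ryser_aux[of ?I m] by simp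
  finally show ?thesis unfolding P by simp
qed

definition Yab :: "nat \<Rightarrow> nat \<Rightarrow> cfg \<Rightarrow> cfg \<Rightarrow> op" where
  "Yab n d a b = (\<lambda>x y. if x \<in> cfgs n d \<and> y \<in> cfgs n d then
     (\<Sum>\<sigma>\<in>{\<sigma>. \<sigma> permutes {0..<n}}. if x = pre n \<sigma> a \<and> y = pre n \<sigma> b then 1 else 0) else 0)"

lemma Yab_comm:
  assumes d: "d \<ge> 1"
    and comm: "\<And>\<rho>. density d \<rho> \<Longrightarrow> commutes_number d N' \<rho> \<Longrightarrow> commutes n d X (tpow n d \<rho>)"
    and a: "a \<in> cfgs n d" and b: "b \<in> cfgs n d" and ab: "vof n N' a = vof n N' b"
  shows "commutes n d X (Yab n d a b)"
proof -
  define E where "E T p q = (\<Sum>k\<in>T. if p = a k \<and> q = b k then 1 else (0::complex))" for T p q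
  have cT: "commutes n d X (tpow n d (E T))" if T: "T \<in> Pow {..<n}" for T
  proof (rule gen_comm[OF d comm])
    fix p q assume "E T p q \<noteq> 0"
    then obtain k where "k \<in> T" "(if p = a k \<and> q = b k then 1 else (0::complex)) \<noteq> 0"
      unfolding E_def by (rule sum.not_neutral_contains_not_neutral)
    then have k: "k \<in> T" "p = a k" "q = b k" by (auto split: if_splits)
    then show "N' p = N' q" using ab T unfolding vof_eq by auto
  qed
  have "Yab n d a b = (\<lambda>x y. \<Sum>T\<in>Pow {..<n}. (-1) ^ (n - card T) * tpow n d (E T) x y)"
  proof (intro ext)
    fix x y
    show "Yab n d a b x y = (\<Sum>T\<in>Pow {..<n}. (-1) ^ (n - card T) * tpow n d (E T) x y)"
    proof (cases "x \<in> cfgs n d \<and> y \<in> cfgs n d")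
      case True
      then have x: "x \<in> cfgs n d" and y: "y \<in> cfgs n d" by auto
      have "(\<Sum>T\<in>Pow {..<n}. (-1) ^ (n - card T) * tpow n d (E T) x y)
          = (\<Sum>T\<in>Pow {..<n}. (-1) ^ (n - card T) * (\<Prod>i<n. \<Sum>k\<in>T. if x i = a k \<and> y i = b k then 1 else 0))"
        unfolding tpow_def E_def using x y by simp
      also have "\<dots> = (\<Sum>\<sigma>\<in>{\<sigma>. \<sigma> permutes {0..<n}}. \<Prod>i<n. if x i = a (\<sigma> i) \<and> y i = b (\<sigma> i) then 1 else 0)"
        by (rule ryser)
      also have "\<dots> = (\<Sum>\<sigma>\<in>{\<sigma>. \<sigma> permutes {0..<n}}. if x = pre n \<sigma> a \<and> y = pre n \<sigma> b then 1 else 0)"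
      proof (rule sum.cong[OF refl])
        fix \<sigma> assume \<sigma>: "\<sigma> \<in> {\<sigma>. \<sigma> permutes {0..<n}}"
        have iff: "(\<forall>i\<in>{..<n}. x i = a (\<sigma> i) \<and> y i = b (\<sigma> i)) \<longleftrightarrow> x = pre n \<sigma> a \<and> y = pre n \<sigma> b"
        proof -
          have s': "\<sigma> permutes {0..<n}" using \<sigma> by simp
          have p1: "(\<forall>i<n. a (\<sigma> i) = x i) \<longleftrightarrow> x = pre n \<sigma> a" by (rule pre_char[OF s' x a])
          have p2: "(\<forall>i<n. b (\<sigma> i) = y i) \<longleftrightarrow> y = pre n \<sigma> b" by (rule pre_char[OF s' y b])
          have q: "(\<forall>i\<in>{..<n}. x i = a (\<sigma> i) \<and> y i = b (\<sigma> i)) \<longleftrightarrow> (\<forall>i<n. a (\<sigma> i) = x i) \<and> (\<forall>i<n. b (\<sigma> i) = y i)"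
            by auto
          show ?thesis unfolding q p1 p2 ..
        qed
        have "(\<Prod>i<n. if x i = a (\<sigma> i) \<and> y i = b (\<sigma> i) then 1 else 0) = (if (\<forall>i\<in>{..<n}. x i = a (\<sigma> i) \<and> y i = b (\<sigma> i)) then 1 else (0::complex))"
          by (rule prod_ind[OF finite_lessThan])
        then show "(\<Prod>i<n. if x i = a (\<sigma> i) \<and> y i = b (\<sigma> i) then 1 else (0::complex)) = (if x = pre n \<sigma> a \<and> y = pre n \<sigma> b then 1 else 0)"
          unfolding iff .
      qed
      finally have eq: "(\<Sum>T\<in>Pow {..<n}. (-1) ^ (n - card T) * tpow n d (E T) x y) = (\<Sum>\<sigma>\<in>{\<sigma>. \<sigma> permutes {0..<n}}. if x = pre n \<sigma> a \<and> y = pre n \<sigma> b then 1 else 0)" .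
      have yab: "Yab n d a b x y = (\<Sum>\<sigma>\<in>{\<sigma>. \<sigma> permutes {0..<n}}. if x = pre n \<sigma> a \<and> y = pre n \<sigma> b then 1 else 0)"
        unfolding Yab_def using x y by simp
      show ?thesis by (rule trans[OF yab eq[symmetric]])
    next
      case False
      have "tpow n d (E T) x y = 0" for T using False unfolding tpow_def by auto
      moreover have "Yab n d a b x y = 0" using False unfolding Yab_def by auto
      ultimately show ?thesis by simp
    qed
  qed
  moreover have "commutes n d X (\<lambda>x y. \<Sum>T\<in>Pow {..<n}. (-1) ^ (n - card T) * tpow n d (E T) x y)"
    by (rule commutes_lin) (rule cT)
  ultimately show ?thesis by simp
qed

lemma W_inv:
  assumes Z: "Z \<in> Wset n d N'" and \<sigma>: "\<sigma> permutes {0..<n}" and x: "x \<in> cfgs n d" and y: "y \<in> cfgs n d"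
  shows "Z (pre n \<sigma> x) (pre n \<sigma> y) = Z x y"
proof -
  have c: "opmult n d Z (perm_op n d False N' \<sigma>) = opmult n d (perm_op n d False N' \<sigma>) Z"
    using Z \<sigma> unfolding Wset_def by auto
  have y': "pre n \<sigma> y \<in> cfgs n d" using pre_in[OF \<sigma> y] .
  have "opmult n d Z (perm_op n d False N' \<sigma>) x (pre n \<sigma> y) = opmult n d (perm_op n d False N' \<sigma>) Z x (pre n \<sigma> y)"
    using c by simp
  then show ?thesis
    using opmult_perm_right[OF \<sigma> x y', of Z False N'] opmult_perm_left[OF \<sigma> x y', of False N' Z]
      pre_inv2[OF \<sigma> y] by simp
qed

lemma W_comm:
  assumes d: "d \<ge> 1"
    and comm: "\<And>\<rho>. density d \<rho> \<Longrightarrow> commutes_number d N' \<rho> \<Longrightarrow> commutes n d X (tpow n d \<rho>)"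
    and Z: "Z \<in> Wset n d N'"
  shows "commutes n d X Z"
proof -
  let ?C = "cfgs n d \<times> cfgs n d"
  define Y' where "Y' p = (\<lambda>x y. if vof n N' (fst p) = vof n N' (snd p) then Yab n d (fst p) (snd p) x y else 0)" for p
  have cY: "commutes n d X (Y' p)" if p: "p \<in> ?C" for p
  proof (cases "vof n N' (fst p) = vof n N' (snd p)")
    case True
    have "commutes n d X (Yab n d (fst p) (snd p))"
      by (rule Yab_comm[OF d comm]) (use p True in auto)
    then show ?thesis unfolding Y'_def using True by simp
  next
    case False
    then have "Y' p = (\<lambda>x y. 0)" unfolding Y'_def by simp
    moreover have "commutes n d X (\<lambda>x y. 0)" unfolding commutes_def opmult_def by (auto intro!: ext)
    ultimately show ?thesis by simp
  qed
  have Zv: "Z a b = 0" if "vof n N' a \<noteq> vof n N' b" for a b using Z that unfolding Wset_def by auto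
  have Zo: "Z x y = 0" if "\<not> (x \<in> cfgs n d \<and> y \<in> cfgs n d)" for x y using Z that unfolding Wset_def ops_def by auto
  have "Z = (\<lambda>x y. \<Sum>p\<in>?C. (Z (fst p) (snd p) / fact n) * Y' p x y)"
  proof (intro ext)
    fix x y
    show "Z x y = (\<Sum>p\<in>?C. (Z (fst p) (snd p) / fact n) * Y' p x y)"
    proof (cases "x \<in> cfgs n d \<and> y \<in> cfgs n d")
      case True
      then have x: "x \<in> cfgs n d" and y: "y \<in> cfgs n d" by auto
      have "(\<Sum>p\<in>?C. (Z (fst p) (snd p) / fact n) * Y' p x y) = (\<Sum>p\<in>?C. (Z (fst p) (snd p) / fact n) * Yab n d (fst p) (snd p) x y)"
        by (rule sum.cong[OF refl]) (auto simp: Y'_def Zv)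
      also have "\<dots> = (\<Sum>p\<in>?C. \<Sum>\<sigma>\<in>{\<sigma>. \<sigma> permutes {0..<n}}. if fst p = pre n (inv \<sigma>) x \<and> snd p = pre n (inv \<sigma>) y then Z (fst p) (snd p) / fact n else 0)"
      proof (rule sum.cong[OF refl])
        fix p assume p: "p \<in> ?C"
        show "(Z (fst p) (snd p) / fact n) * Yab n d (fst p) (snd p) x y = (\<Sum>\<sigma>\<in>{\<sigma>. \<sigma> permutes {0..<n}}. if fst p = pre n (inv \<sigma>) x \<and> snd p = pre n (inv \<sigma>) y then Z (fst p) (snd p) / fact n else 0)"
          unfolding Yab_def using x y p
          by (auto simp: sum_distrib_left pre_swap intro!: sum.cong)
      qed
      also have "\<dots> = (\<Sum>\<sigma>\<in>{\<sigma>. \<sigma> permutes {0..<n}}. \<Sum>p\<in>?C. if p = (pre n (inv \<sigma>) x, pre n (inv \<sigma>) y) then Z (fst p) (snd p) / fact n else 0)"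
        by (subst sum.swap) (auto intro!: sum.cong)
      also have "\<dots> = (\<Sum>\<sigma>\<in>{\<sigma>. \<sigma> permutes {0..<n}}. Z x y / fact n)"
      proof (rule sum.cong[OF refl])
        fix \<sigma> assume \<sigma>: "\<sigma> \<in> {\<sigma>. \<sigma> permutes {0..<n}}"
        then have \<sigma>': "inv \<sigma> permutes {0..<n}" by (simp add: permutes_inv)
        have "(pre n (inv \<sigma>) x, pre n (inv \<sigma>) y) \<in> ?C" using pre_in[OF \<sigma>' x] pre_in[OF \<sigma>' y] by auto
        then show "(\<Sum>p\<in>?C. if p = (pre n (inv \<sigma>) x, pre n (inv \<sigma>) y) then Z (fst p) (snd p) / fact n else 0) = Z x y / fact n"
          using W_inv[OF Z \<sigma>' x y] by (simp add: sum.delta')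
      qed
      also have "\<dots> = Z x y" by (simp add: card_Perms)
      finally show ?thesis by simp
    next
      case False
      have "Y' p x y = 0" for p using False unfolding Y'_def Yab_def by auto
      then show ?thesis using Zo[OF False] by simp
    qed
  qed
  moreover have "commutes n d X (\<lambda>x y. \<Sum>p\<in>?C. (Z (fst p) (snd p) / fact n) * Y' p x y)"
    by (rule commutes_lin) (rule cY)
  ultimately show ?thesis by simp
qed



lemma commutes_sym: "commutes n d X Y \<longleftrightarrow> commutes n d Y X"
  unfolding commutes_def by auto

lemma comm_lin:
  assumes "\<And>i. i \<in> I \<Longrightarrow> f i \<in> commutant n d T"
  shows "(\<lambda>x y. \<Sum>i\<in>I. c i * f i x y) \<in> commutant n d T"
  unfolding commutant_def
proof (intro CollectI conjI ballI)
  show "(\<lambda>x y. \<Sum>i\<in>I. c i * f i x y) \<in> ops n d"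
    using assms unfolding commutant_def ops_def by auto
  fix Y assume Y: "Y \<in> T"
  have "commutes n d Y (\<lambda>x y. \<Sum>i\<in>I. c i * f i x y)"
    by (rule commutes_lin) (use assms Y in \<open>auto simp: commutant_def commutes_def\<close>)
  then show "opmult n d (\<lambda>x y. \<Sum>i\<in>I. c i * f i x y) Y = opmult n d Y (\<lambda>x y. \<Sum>i\<in>I. c i * f i x y)"
    unfolding commutes_def by simp
qed

lemma tpow_ops: "tpow n d \<rho> \<in> ops n d"
  unfolding tpow_def ops_def by auto

lemma cn_nz: "commutes_number d N \<rho> \<Longrightarrow> a < d \<Longrightarrow> b < d \<Longrightarrow> \<rho> a b \<noteq> 0 \<Longrightarrow> N a = N b"
  unfolding commutes_number_def by (metis mult.commute mult_cancel_left of_nat_eq_iff)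

lemma tpow_nz_vof:
  assumes cn: "commutes_number d N \<rho>" and x: "x \<in> cfgs n d" and y: "y \<in> cfgs n d" and nz: "tpow n d \<rho> x y \<noteq> 0"
  shows "vof n N x = vof n N y"
  unfolding vof_eq
proof (intro allI impI)
  fix i assume i: "i < n"
  have "\<rho> (x i) (y i) \<noteq> 0"
  proof
    assume "\<rho> (x i) (y i) = 0"
    then have "(\<Prod>i<n. \<rho> (x i) (y i)) = 0" using i by (intro prod_zero) auto
    then show False using nz x y unfolding tpow_def by simp
  qed
  then show "N (x i) = N (y i)" using cn_nz[OF cn] cfgs_in[OF x i] cfgs_in[OF y i] by blast
qed

lemma perm_sign_vof: "vof n N x = vof n N y \<Longrightarrow> perm_sign f N n \<sigma> x = perm_sign f N n \<sigma> y"
  unfolding perm_sign_def vof_eq by (auto intro!: prod.cong)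

lemma perm_sign_nz: "perm_sign f N n \<sigma> x \<noteq> 0"
proof -
  have fin: "finite {(i, j). i < j \<and> j < n \<and> \<sigma> j < \<sigma> i}"
    by (rule finite_subset[of _ "{..<n} \<times> {..<n}"]) auto
  show ?thesis unfolding perm_sign_def by (simp add: prod_zero_iff[OF fin])
qed

lemma tpow_perm_comm:
  assumes cn: "commutes_number d N \<rho>" and \<sigma>: "\<sigma> permutes {0..<n}"
  shows "opmult n d (tpow n d \<rho>) (perm_op n d f N \<sigma>) = opmult n d (perm_op n d f N \<sigma>) (tpow n d \<rho>)"
proof (intro ext)
  fix x y
  show "opmult n d (tpow n d \<rho>) (perm_op n d f N \<sigma>) x y = opmult n d (perm_op n d f N \<sigma>) (tpow n d \<rho>) x y"
  proof (cases "x \<in> cfgs n d \<and> y \<in> cfgs n d")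
    case True
    then have x: "x \<in> cfgs n d" and y: "y \<in> cfgs n d" by auto
    have y': "pre n (inv \<sigma>) y \<in> cfgs n d" using pre_in[OF permutes_inv[OF \<sigma>] y] .
    have x': "pre n \<sigma> x \<in> cfgs n d" using pre_in[OF \<sigma> x] .
    have "(\<Prod>i<n. \<rho> (x i) (pre n (inv \<sigma>) y i)) = (\<Prod>i<n. \<rho> (x i) (y (inv \<sigma> i)))"
      by (rule prod.cong) (auto simp: pre_app)
    also have "\<dots> = (\<Prod>i<n. \<rho> (x (\<sigma> i)) (y (inv \<sigma> (\<sigma> i))))"
      using prod.permute[of \<sigma> "{..<n}" "\<lambda>i. \<rho> (x i) (y (inv \<sigma> i))"] \<sigma>
      by (simp add: atLeast0LessThan comp_def)
    also have "\<dots> = (\<Prod>i<n. \<rho> (pre n \<sigma> x i) (y i))"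
      by (rule prod.cong) (auto simp: pre_app permutes_inverses(2)[OF \<sigma>])
    finally have eq: "tpow n d \<rho> x (pre n (inv \<sigma>) y) = tpow n d \<rho> (pre n \<sigma> x) y"
      unfolding tpow_def using x y x' y' by simp
    have sg: "tpow n d \<rho> (pre n \<sigma> x) y * perm_sign f N n \<sigma> y = perm_sign f N n \<sigma> (pre n \<sigma> x) * tpow n d \<rho> (pre n \<sigma> x) y"
    proof (cases "tpow n d \<rho> (pre n \<sigma> x) y = 0")
      case False
      then have "vof n N (pre n \<sigma> x) = vof n N y" by (rule tpow_nz_vof[OF cn x' y])
      then show ?thesis using perm_sign_vof[of n N "pre n \<sigma> x" y f \<sigma>] by simp
    qed simp
    show ?thesis using opmult_perm_right[OF \<sigma> x y] opmult_perm_left[OF \<sigma> x y] eq sg by simp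
  next
    case False then show ?thesis by (simp add: opmult_out)
  qed
qed

lemma opmult_num_right: "x \<in> cfgs n d \<Longrightarrow> y \<in> cfgs n d \<Longrightarrow> opmult n d A (num_op n d N i) x y = A x y * of_nat (N (y i))"
  unfolding opmult_def num_op_def
  by (simp add: if_distrib[of "\<lambda>t. A x _ * t"] sum.delta cong: if_cong)

lemma opmult_num_left: "x \<in> cfgs n d \<Longrightarrow> y \<in> cfgs n d \<Longrightarrow> opmult n d (num_op n d N i) A x y = of_nat (N (x i)) * A x y"
  unfolding opmult_def num_op_def
  by (simp add: if_distrib[of "\<lambda>t. t * A _ y"] sum.delta' cong: if_cong)

lemma tpow_num_comm:
  assumes cn: "commutes_number d N \<rho>" and i: "i < n"
  shows "opmult n d (tpow n d \<rho>) (num_op n d N i) = opmult n d (num_op n d N i) (tpow n d \<rho>)"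
proof (intro ext)
  fix x y
  show "opmult n d (tpow n d \<rho>) (num_op n d N i) x y = opmult n d (num_op n d N i) (tpow n d \<rho>) x y"
  proof (cases "x \<in> cfgs n d \<and> y \<in> cfgs n d")
    case True
    then have x: "x \<in> cfgs n d" and y: "y \<in> cfgs n d" by auto
    have "tpow n d \<rho> x y * of_nat (N (y i)) = of_nat (N (x i)) * tpow n d \<rho> x y"
    proof (cases "tpow n d \<rho> x y = 0")
      case False
      then have "vof n N x = vof n N y" by (rule tpow_nz_vof[OF cn x y])
      then have "N (x i) = N (y i)" using i unfolding vof_eq by auto
      then show ?thesis by simp
    qed simp
    then show ?thesis using opmult_num_right[OF x y] opmult_num_left[OF x y] by simp
  next
    case False then show ?thesis by (simp add: opmult_out)
  qed
qed



lemma Z_block: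
  assumes Z: "Z \<in> commutant n d (perm_ops n d f N \<union> {num_op n d N i | i. i < n})"
  shows "Z x y \<noteq> 0 \<Longrightarrow> vof n N x = vof n N y"
proof -
  assume nz: "Z x y \<noteq> 0"
  have Zo: "Z \<in> ops n d" using Z unfolding commutant_def by auto
  then have x: "x \<in> cfgs n d" and y: "y \<in> cfgs n d" using nz unfolding ops_def by auto
  show ?thesis unfolding vof_eq
  proof (intro allI impI)
    fix i assume i: "i < n"
    have "opmult n d Z (num_op n d N i) = opmult n d (num_op n d N i) Z"
      using Z i unfolding commutant_def by auto
    then have "opmult n d Z (num_op n d N i) x y = opmult n d (num_op n d N i) Z x y" by simp
    then have "Z x y * of_nat (N (y i)) = of_nat (N (x i)) * Z x y"
      using opmult_num_right[OF x y] opmult_num_left[OF x y] by simp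
    then show "N (x i) = N (y i)" using nz by (simp add: mult.commute)
  qed
qed

lemma Z_inv:
  assumes Z: "Z \<in> commutant n d (perm_ops n d f N \<union> {num_op n d N i | i. i < n})"
    and \<sigma>: "\<sigma> permutes {0..<n}" and x: "x \<in> cfgs n d" and y: "y \<in> cfgs n d"
  shows "Z x (pre n (inv \<sigma>) y) = Z (pre n \<sigma> x) y"
proof -
  have "perm_op n d f N \<sigma> \<in> perm_ops n d f N" unfolding perm_ops_def using \<sigma> by auto
  then have "opmult n d Z (perm_op n d f N \<sigma>) = opmult n d (perm_op n d f N \<sigma>) Z"
    using Z unfolding commutant_def by auto
  then have "opmult n d Z (perm_op n d f N \<sigma>) x y = opmult n d (perm_op n d f N \<sigma>) Z x y" by simp
  then have eq: "Z x (pre n (inv \<sigma>) y) * perm_sign f N n \<sigma> y = perm_sign f N n \<sigma> (pre n \<sigma> x) * Z (pre n \<sigma> x) y"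
    using opmult_perm_right[OF \<sigma> x y] opmult_perm_left[OF \<sigma> x y] by simp
  show ?thesis
  proof (cases "Z (pre n \<sigma> x) y = 0")
    case True
    then show ?thesis using eq perm_sign_nz[of f N n \<sigma> y] by simp
  next
    case False
    then have "vof n N (pre n \<sigma> x) = vof n N y" by (rule Z_block[OF Z])
    then have "perm_sign f N n \<sigma> (pre n \<sigma> x) = perm_sign f N n \<sigma> y" by (rule perm_sign_vof)
    then show ?thesis using eq perm_sign_nz[of f N n \<sigma> y] by simp
  qed
qed

lemma gen_dc:
  assumes i: "i \<in> GI n d N"
  shows "genf n d N i \<in> dcommutant n d (perm_ops n d f N \<union> {num_op n d N i | i. i < n})"
  unfolding dcommutant_def commutant_def[of n d "commutant n d _"]
proof (intro CollectI conjI ballI)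
  show "genf n d N i \<in> ops n d" by (rule gen_ops)
  obtain u \<tau> where iu: "i = (u, \<tau>)" and \<tau>: "\<tau> permutes {0..<n}" using i unfolding GI_def by auto
  fix Z assume Z: "Z \<in> commutant n d (perm_ops n d f N \<union> {num_op n d N i | i. i < n})"
  show "opmult n d (genf n d N i) Z = opmult n d Z (genf n d N i)"
  proof (intro ext)
    fix x y
    show "opmult n d (genf n d N i) Z x y = opmult n d Z (genf n d N i) x y"
    proof (cases "x \<in> cfgs n d \<and> y \<in> cfgs n d")
      case True
      then have x: "x \<in> cfgs n d" and y: "y \<in> cfgs n d" by auto
      have \<tau>i: "inv \<tau> permutes {0..<n}" using permutes_inv[OF \<tau>] .
      have l: "opmult n d (genf n d N i) Z x y = (if vof n N x = u then Z (pre n \<tau> x) y else 0)"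
      proof -
        have "opmult n d (genf n d N i) Z x y = (\<Sum>z\<in>cfgs n d. if z = pre n \<tau> x then (if vof n N x = u then Z z y else 0) else 0)"
          unfolding opmult_in[OF x y] iu genf_def gen_def using x by (intro sum.cong) auto
        also have "\<dots> = (if vof n N x = u then Z (pre n \<tau> x) y else 0)"
          using pre_in[OF \<tau> x] by (simp add: sum.delta')
        finally show ?thesis .
      qed
      have r: "opmult n d Z (genf n d N i) x y = (if vof n N (pre n (inv \<tau>) y) = u then Z x (pre n (inv \<tau>) y) else 0)"
      proof -
        have "opmult n d Z (genf n d N i) x y = (\<Sum>z\<in>cfgs n d. if z = pre n (inv \<tau>) y then (if vof n N z = u then Z x z else 0) else 0)"
          unfolding opmult_in[OF x y] iu genf_def gen_def using y pre_swap[OF \<tau> _ y] by (intro sum.cong) auto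
        also have "\<dots> = (if vof n N (pre n (inv \<tau>) y) = u then Z x (pre n (inv \<tau>) y) else 0)"
          using pre_in[OF \<tau>i y] by (simp add: sum.delta')
        finally show ?thesis .
      qed
      have zi: "Z x (pre n (inv \<tau>) y) = Z (pre n \<tau> x) y" by (rule Z_inv[OF Z \<tau> x y])
      show ?thesis
      proof (cases "Z (pre n \<tau> x) y = 0")
        case True then show ?thesis using l r zi by simp
      next
        case False
        then have "vof n N x = vof n N (pre n (inv \<tau>) y)" using zi Z_block[OF Z] by metis
        then show ?thesis using l r zi by simp
      qed
    next
      case False then show ?thesis by (simp add: opmult_out)
    qed
  qed
qed

lemma BW:
  assumes d: "d \<ge> 1" and X: "X \<in> Bcom n d (\<lambda>\<rho>. density d \<rho> \<and> commutes_number d N' \<rho>)"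
  shows "X \<in> ispan (GI n d N') (genf n d N')"
proof -
  have Xo: "X \<in> ops n d" using X unfolding Bcom_def commutant_def by auto
  have comm: "commutes n d X (tpow n d \<rho>)" if "density d \<rho>" "commutes_number d N' \<rho>" for \<rho>
    using X that unfolding Bcom_def commutant_def commutes_def by auto
  show ?thesis
  proof (rule DC[OF Xo])
    fix Z assume Zw: "Z \<in> Wset n d N'"
    have "commutes n d X Z" by (rule W_comm[where N'=N']) (use d comm Zw in auto)
    then show "opmult n d X Z = opmult n d Z X" unfolding commutes_def .
  qed
qed

lemma subset_dc: "S \<subseteq> ops n d \<Longrightarrow> S \<subseteq> dcommutant n d S"
  unfolding dcommutant_def commutant_def by auto

theorem lemma4:
  fixes n d :: nat and N :: "nat \<Rightarrow> nat" and ferm :: bool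
  assumes "d \<ge> 1"
  shows "(Bcom n d (density d) = dcommutant n d (perm_ops n d False N) \<and>
          dcommutant n d (perm_ops n d False N) = perm_span n d) \<and>
         Bcom n d (\<lambda>\<rho>. density d \<rho> \<and> commutes_number d N \<rho>) =
           dcommutant n d (perm_ops n d ferm N \<union> {num_op n d N i | i. i < n})"
proof -
  note d = assms
  define N0 where "N0 = (\<lambda>_::nat. 0::nat)"
  let ?P = "{\<sigma>. \<sigma> permutes {0..<n}}"
  have cn0: "commutes_number d N0 \<rho>" for \<rho> by (simp add: commutes_number_def N0_def)
  have BcomA: "Bcom n d (density d) = Bcom n d (\<lambda>\<rho>. density d \<rho> \<and> commutes_number d N0 \<rho>)"
    using cn0 by (simp add: Bcom_def)
  have pops: "perm_ops n d False N \<subseteq> ops n d" unfolding perm_ops_def perm_op_def ops_def by auto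
  have a1: "Bcom n d (density d) \<subseteq> perm_span n d"
  proof
    fix X assume "X \<in> Bcom n d (density d)"
    then have "X \<in> ispan (GI n d N0) (genf n d N0)" using BW[OF d] BcomA by auto
    then obtain c where c: "X = (\<lambda>x y. \<Sum>i\<in>GI n d N0. c i * genf n d N0 i x y)" unfolding ispan_def by auto
    define v0 where "v0 = restrict (\<lambda>_::nat. 0::nat) {0..<n}"
    have vv: "vof n N0 x = v0" for x unfolding vof_def v0_def N0_def by (simp add: comp_def)
    have ne: "cfgs n d \<noteq> {}"
    proof -
      have "restrict (\<lambda>_. 0) {0..<n} \<in> cfgs n d" unfolding cfgs_def using d by auto
      then show ?thesis by auto
    qed
    have GI0: "GI n d N0 = {v0} \<times> ?P" unfolding GI_def using vv ne by auto
    have gp: "genf n d N0 (v0, \<tau>) = perm_op n d False (\<lambda>_. 0) \<tau>" if \<tau>: "\<tau> permutes {0..<n}" for \<tau>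
    proof (intro ext)
      fix c e
      show "genf n d N0 (v0, \<tau>) c e = perm_op n d False (\<lambda>_. 0) \<tau> c e"
        unfolding genf_def gen_def perm_op_def using vv pre_char[OF \<tau>, of e d c] by auto
    qed
    have bij: "bij_betw (\<lambda>\<tau>. (v0, \<tau>)) ?P ({v0} \<times> ?P)" by (auto simp: bij_betw_def inj_on_def)
    have "X = (\<lambda>y x. \<Sum>\<sigma>\<in>?P. c (v0, \<sigma>) * perm_op n d False (\<lambda>_. 0) \<sigma> y x)"
    proof (intro ext)
      fix y x
      have "X y x = (\<Sum>i\<in>{v0} \<times> ?P. c i * genf n d N0 i y x)" unfolding c GI0 ..
      also have "\<dots> = (\<Sum>\<sigma>\<in>?P. c (v0, \<sigma>) * genf n d N0 (v0, \<sigma>) y x)"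
        by (rule sum.reindex_bij_betw[OF bij, symmetric])
      also have "\<dots> = (\<Sum>\<sigma>\<in>?P. c (v0, \<sigma>) * perm_op n d False (\<lambda>_. 0) \<sigma> y x)"
        by (rule sum.cong) (auto simp: gp)
      finally show "X y x = (\<Sum>\<sigma>\<in>?P. c (v0, \<sigma>) * perm_op n d False (\<lambda>_. 0) \<sigma> y x)" .
    qed
    then show "X \<in> perm_span n d" unfolding perm_span_def mem_Collect_eq by (rule exI[of _ "\<lambda>\<sigma>. c (v0, \<sigma>)"])
  qed
  have a2: "perm_span n d \<subseteq> dcommutant n d (perm_ops n d False N)"
  proof
    fix X assume "X \<in> perm_span n d"
    then obtain c where c: "X = (\<lambda>y x. \<Sum>\<sigma>\<in>?P. c \<sigma> * perm_op n d False (\<lambda>_. 0) \<sigma> y x)"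
      unfolding perm_span_def by auto
    have "perm_op n d False (\<lambda>_. 0) \<sigma> \<in> dcommutant n d (perm_ops n d False N)" if "\<sigma> \<in> ?P" for \<sigma>
    proof -
      have "perm_op n d False (\<lambda>_. 0) \<sigma> \<in> perm_ops n d False N"
        unfolding perm_ops_def using that perm_op_False_indep[of n d N \<sigma> "\<lambda>_. 0"] by (intro CollectI exI[of _ \<sigma>]) auto
      then show ?thesis using subset_dc[OF pops] by auto
    qed
    then show "X \<in> dcommutant n d (perm_ops n d False N)"
      unfolding c dcommutant_def by (rule comm_lin)
  qed
  have a3: "dcommutant n d (perm_ops n d False N) \<subseteq> Bcom n d (density d)"
  proof
    fix X assume X: "X \<in> dcommutant n d (perm_ops n d False N)"
    have "tpow n d \<rho> \<in> commutant n d (perm_ops n d False N)" for \<rho>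
      unfolding commutant_def
    proof (intro CollectI conjI ballI)
      show "tpow n d \<rho> \<in> ops n d" by (rule tpow_ops)
      fix Y assume "Y \<in> perm_ops n d False N"
      then obtain \<sigma> where \<sigma>: "\<sigma> permutes {0..<n}" and Y: "Y = perm_op n d False N \<sigma>"
        unfolding perm_ops_def by auto
      have "Y = perm_op n d False N0 \<sigma>" using Y perm_op_False_indep by metis
      then show "opmult n d (tpow n d \<rho>) Y = opmult n d Y (tpow n d \<rho>)"
        using tpow_perm_comm[OF cn0 \<sigma>] by simp
    qed
    then show "X \<in> Bcom n d (density d)"
      using X unfolding dcommutant_def Bcom_def commutant_def[of n d "{tpow n d \<rho> |\<rho>. density d \<rho>}"]
      by (auto simp: commutant_def)
  qed
  let ?S = "perm_ops n d ferm N \<union> {num_op n d N i | i. i < n}"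
  have b1: "Bcom n d (\<lambda>\<rho>. density d \<rho> \<and> commutes_number d N \<rho>) \<subseteq> dcommutant n d ?S"
  proof
    fix X assume "X \<in> Bcom n d (\<lambda>\<rho>. density d \<rho> \<and> commutes_number d N \<rho>)"
    then have "X \<in> ispan (GI n d N) (genf n d N)" by (rule BW[OF d])
    then obtain c where c: "X = (\<lambda>x y. \<Sum>i\<in>GI n d N. c i * genf n d N i x y)" unfolding ispan_def by auto
    show "X \<in> dcommutant n d ?S" unfolding c dcommutant_def
      by (rule comm_lin) (use gen_dc[of _ n d N ferm] in \<open>auto simp: dcommutant_def\<close>)
  qed
  have b2: "dcommutant n d ?S \<subseteq> Bcom n d (\<lambda>\<rho>. density d \<rho> \<and> commutes_number d N \<rho>)"
  proof
    fix X assume X: "X \<in> dcommutant n d ?S"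
    have "tpow n d \<rho> \<in> commutant n d ?S" if cn: "commutes_number d N \<rho>" for \<rho>
      unfolding commutant_def
    proof (intro CollectI conjI ballI)
      show "tpow n d \<rho> \<in> ops n d" by (rule tpow_ops)
      fix Y assume "Y \<in> ?S"
      then consider (p) \<sigma> where "\<sigma> permutes {0..<n}" "Y = perm_op n d ferm N \<sigma>"
        | (q) i where "i < n" "Y = num_op n d N i"
        unfolding perm_ops_def by auto
      then show "opmult n d (tpow n d \<rho>) Y = opmult n d Y (tpow n d \<rho>)"
      proof cases
        case p then show ?thesis using tpow_perm_comm[OF cn p(1)] by simp
      next
        case q then show ?thesis using tpow_num_comm[OF cn q(1)] by simp
      qed
    qed
    then show "X \<in> Bcom n d (\<lambda>\<rho>. density d \<rho> \<and> commutes_number d N \<rho>)"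
      using X unfolding dcommutant_def Bcom_def
      by (auto simp: commutant_def)
  qed
  show ?thesis using a1 a2 a3 b1 b2 by blast
qed


end
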